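(* Let $k$ be an algebraically closed field, $A$ a finite dimensional $k$-algebra and $f\colon P_1\to P_0$ a morphism in $\operatorname{proj}A$. Then $\mathcal{W}_f$ is a wide subcategory of $\operatorname{mod}A$ (closed under kernels, cokernels and extensions).
   Context: Let $\nu=D\operatorname{Hom}_A(-,A)$ be the Nakayama functor, $C_f=\operatorname{Cok}f$ and $K_{\nu f}=\operatorname{Ker}(\nu f\colon\nu P_1\to\nu P_0)$. Define $\overline{\mathcal{T}}_f=\{X\in\operatorname{mod}A\mid\operatorname{Hom}_A(X,K_{\nu f})=0\}$, $\overline{\mathcal{F}}_f=\{X\in\operatorname{mod}A\mid\operatorname{Hom}_A(C_f,X)=0\}$ and $\mathcal{W}_f=\overline{\mathcal{T}}_f\cap\overline{\mathcal{F}}_f$. *)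

theory Defs
  imports Main "HOL-Computational_Algebra.Polynomial"
begin

definition alg_closed :: "'k::field itself \<Rightarrow> bool" where
  "alg_closed _ \<longleftrightarrow> (\<forall>p::'k poly. degree p > 0 \<longrightarrow> (\<exists>x. poly p x = 0))"

definition fd_algebra :: "('k::field \<Rightarrow> 'a::ring_1) \<Rightarrow> bool" where
  "fd_algebra emb \<longleftrightarrow>
     (\<forall>x y. emb (x + y) = emb x + emb y) \<and>
     (\<forall>x y. emb (x * y) = emb x * emb y) \<and>
     emb 1 = 1 \<and>
     (\<forall>c a. emb c * a = a * emb c) \<and>
     (\<exists>B. finite B \<and> (\<forall>a. \<exists>c. a = (\<Sum>b\<in>B. emb (c b) * b)))"

record ('a, 'm) amod =
  mcar :: "'m set"
  madd :: "'m \<Rightarrow> 'm \<Rightarrow> 'm"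
  mzero :: "'m"
  mact :: "'a \<Rightarrow> 'm \<Rightarrow> 'm"

definition is_amod :: "('a::ring_1, 'm) amod \<Rightarrow> bool" where
  "is_amod M \<longleftrightarrow>
     mzero M \<in> mcar M \<and>
     (\<forall>x\<in>mcar M. \<forall>y\<in>mcar M. madd M x y \<in> mcar M) \<and>
     (\<forall>a. \<forall>x\<in>mcar M. mact M a x \<in> mcar M) \<and>
     (\<forall>x\<in>mcar M. \<forall>y\<in>mcar M. \<forall>z\<in>mcar M. madd M (madd M x y) z = madd M x (madd M y z)) \<and>
     (\<forall>x\<in>mcar M. \<forall>y\<in>mcar M. madd M x y = madd M y x) \<and>
     (\<forall>x\<in>mcar M. madd M (mzero M) x = x) \<and>
     (\<forall>x\<in>mcar M. \<exists>y\<in>mcar M. madd M x y = mzero M) \<and>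
     (\<forall>a. \<forall>x\<in>mcar M. \<forall>y\<in>mcar M. mact M a (madd M x y) = madd M (mact M a x) (mact M a y)) \<and>
     (\<forall>a b. \<forall>x\<in>mcar M. mact M (a + b) x = madd M (mact M a x) (mact M b x)) \<and>
     (\<forall>a b. \<forall>x\<in>mcar M. mact M (a * b) x = mact M a (mact M b x)) \<and>
     (\<forall>x\<in>mcar M. mact M 1 x = x)"

fun lincomb :: "('a, 'm) amod \<Rightarrow> ('a \<times> 'm) list \<Rightarrow> 'm" where
  "lincomb M [] = mzero M"
| "lincomb M ((a, g) # xs) = madd M (mact M a g) (lincomb M xs)"

definition in_modA :: "('a::ring_1, 'm) amod \<Rightarrow> bool" where
  "in_modA M \<longleftrightarrow> is_amod M \<and>
     (\<exists>gs. set gs \<subseteq> mcar M \<and> (\<forall>x\<in>mcar M. \<exists>cs. map snd cs = gs \<and> x = lincomb M cs))"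

definition ahom :: "('a::ring_1, 'm) amod \<Rightarrow> ('a, 'n) amod \<Rightarrow> ('m \<Rightarrow> 'n) \<Rightarrow> bool" where
  "ahom M N g \<longleftrightarrow>
     (\<forall>x\<in>mcar M. g x \<in> mcar N) \<and>
     (\<forall>x\<in>mcar M. \<forall>y\<in>mcar M. g (madd M x y) = madd N (g x) (g y)) \<and>
     (\<forall>a. \<forall>x\<in>mcar M. g (mact M a x) = mact N a (g x))"

definition free_mod :: "nat \<Rightarrow> ('a::ring_1, nat \<Rightarrow> 'a) amod" where
  "free_mod n = \<lparr> mcar = {v. \<forall>i\<ge>n. v i = 0}, madd = (\<lambda>v w i. v i + w i),
                  mzero = (\<lambda>i. 0), mact = (\<lambda>a v i. a * v i) \<rparr>"

definition reg_mod :: "('a::ring_1, 'a) amod" where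
  "reg_mod = \<lparr> mcar = UNIV, madd = (+), mzero = 0, mact = (*) \<rparr>"

definition in_projA :: "('a::ring_1, 'm) amod \<Rightarrow> bool" where
  "in_projA P \<longleftrightarrow> is_amod P \<and>
     (\<exists>n i r. ahom P (free_mod n) i \<and> ahom (free_mod n) P r \<and> (\<forall>x\<in>mcar P. r (i x) = x))"

definition homA :: "('a::ring_1, 'p) amod \<Rightarrow> ('p \<Rightarrow> 'a) set" where
  "homA P = {h. ahom P reg_mod h \<and> (\<forall>p. p \<notin> mcar P \<longrightarrow> h p = 0)}"

text \<open>\<nu>P = D Hom_A(P,A): k-linear functionals on the k-space Hom_A(P,A)
  (extensional), with left A-action (a\<phi>)(h) = \<phi>(h a).\<close>
definition nak :: "('k::field \<Rightarrow> 'a::ring_1) \<Rightarrow> ('a, 'p) amod \<Rightarrow> ('a, ('p \<Rightarrow> 'a) \<Rightarrow> 'k) amod" where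
  "nak emb P = \<lparr>
     mcar = {\<phi>. (\<forall>h\<in>homA P. \<forall>h'\<in>homA P. \<phi> (\<lambda>p. h p + h' p) = \<phi> h + \<phi> h') \<and>
                (\<forall>c. \<forall>h\<in>homA P. \<phi> (\<lambda>p. h p * emb c) = c * \<phi> h) \<and>
                (\<forall>h. h \<notin> homA P \<longrightarrow> \<phi> h = 0)},
     madd = (\<lambda>\<phi> \<psi> h. \<phi> h + \<psi> h),
     mzero = (\<lambda>h. 0),
     mact = (\<lambda>a \<phi> h. if h \<in> homA P then \<phi> (\<lambda>p. h p * a) else 0) \<rparr>"

text \<open>\<nu>f : \<nu>P1 \<rightarrow> \<nu>P0 for f : P1 \<rightarrow> P0, i.e. D Hom_A(f, A).\<close>
definition nak_map :: "('a::ring_1, 'p1) amod \<Rightarrow> ('a, 'p0) amod \<Rightarrow> ('p1 \<Rightarrow> 'p0)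
    \<Rightarrow> (('p1 \<Rightarrow> 'a) \<Rightarrow> 'k::field) \<Rightarrow> (('p0 \<Rightarrow> 'a) \<Rightarrow> 'k)" where
  "nak_map P1 P0 f \<phi> = (\<lambda>h. if h \<in> homA P0 then \<phi> (\<lambda>p. if p \<in> mcar P1 then h (f p) else 0) else 0)"

definition K_nak :: "('k::field \<Rightarrow> 'a::ring_1) \<Rightarrow> ('a, 'p1) amod \<Rightarrow> ('a, 'p0) amod \<Rightarrow> ('p1 \<Rightarrow> 'p0)
    \<Rightarrow> ('a, ('p1 \<Rightarrow> 'a) \<Rightarrow> 'k) amod" where
  "K_nak emb P1 P0 f =
     (nak emb P1)\<lparr> mcar := {\<phi> \<in> mcar (nak emb P1). nak_map P1 P0 f \<phi> = (\<lambda>h. 0)} \<rparr>"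

definition ker_mod :: "('a, 'm) amod \<Rightarrow> ('a, 'n) amod \<Rightarrow> ('m \<Rightarrow> 'n) \<Rightarrow> ('a, 'm) amod" where
  "ker_mod M N g = M\<lparr> mcar := {x \<in> mcar M. g x = mzero N} \<rparr>"

text \<open>C_f = Cok f, realised as the quotient of P0 by the image of f (cosets).\<close>
definition coker_mod :: "('a, 'p1) amod \<Rightarrow> ('a, 'p0) amod \<Rightarrow> ('p1 \<Rightarrow> 'p0) \<Rightarrow> ('a, 'p0 set) amod" where
  "coker_mod P1 P0 f =
     (let I = f ` mcar P1;
          cos = (\<lambda>x. {madd P0 x y | y. y \<in> I}) in
      \<lparr> mcar = {cos x | x. x \<in> mcar P0},
        madd = (\<lambda>S T. {madd P0 s t | s t. s \<in> S \<and> t \<in> T}),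
        mzero = cos (mzero P0),
        mact = (\<lambda>a S. {madd P0 (mact P0 a s) i | s i. s \<in> S \<and> i \<in> I}) \<rparr>)"

definition Tbar :: "('k::field \<Rightarrow> 'a::ring_1) \<Rightarrow> ('a, 'p1) amod \<Rightarrow> ('a, 'p0) amod \<Rightarrow> ('p1 \<Rightarrow> 'p0)
    \<Rightarrow> ('a, 'x) amod \<Rightarrow> bool" where
  "Tbar emb P1 P0 f X \<longleftrightarrow> in_modA X \<and>
     (\<forall>g. ahom X (K_nak emb P1 P0 f) g \<longrightarrow> (\<forall>x\<in>mcar X. g x = mzero (K_nak emb P1 P0 f)))"

definition Fbar :: "('a::ring_1, 'p1) amod \<Rightarrow> ('a, 'p0) amod \<Rightarrow> ('p1 \<Rightarrow> 'p0)
    \<Rightarrow> ('a, 'x) amod \<Rightarrow> bool" where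
  "Fbar P1 P0 f X \<longleftrightarrow> in_modA X \<and>
     (\<forall>g. ahom (coker_mod P1 P0 f) X g \<longrightarrow> (\<forall>c\<in>mcar (coker_mod P1 P0 f). g c = mzero X))"

definition Wf :: "('k::field \<Rightarrow> 'a::ring_1) \<Rightarrow> ('a, 'p1) amod \<Rightarrow> ('a, 'p0) amod \<Rightarrow> ('p1 \<Rightarrow> 'p0)
    \<Rightarrow> ('a, 'x) amod \<Rightarrow> bool" where
  "Wf emb P1 P0 f X \<longleftrightarrow> Tbar emb P1 P0 f X \<and> Fbar P1 P0 f X"

end

theory Submission
  imports Defs
begin


lemma am_zero: "is_amod M \<Longrightarrow> mzero M \<in> mcar M" by (simp add: is_amod_def)
lemma am_add: "is_amod M \<Longrightarrow> x \<in> mcar M \<Longrightarrow> y \<in> mcar M \<Longrightarrow> madd M x y \<in> mcar M" by (simp add: is_amod_def)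
lemma am_act: "is_amod M \<Longrightarrow> x \<in> mcar M \<Longrightarrow> mact M a x \<in> mcar M" by (simp add: is_amod_def)
lemma am_assoc: "is_amod M \<Longrightarrow> x \<in> mcar M \<Longrightarrow> y \<in> mcar M \<Longrightarrow> z \<in> mcar M \<Longrightarrow> madd M (madd M x y) z = madd M x (madd M y z)" unfolding is_amod_def by blast
lemma am_comm: "is_amod M \<Longrightarrow> x \<in> mcar M \<Longrightarrow> y \<in> mcar M \<Longrightarrow> madd M x y = madd M y x" unfolding is_amod_def by blast
lemma am_lzero: "is_amod M \<Longrightarrow> x \<in> mcar M \<Longrightarrow> madd M (mzero M) x = x" unfolding is_amod_def by blast
lemma am_inv: "is_amod M \<Longrightarrow> x \<in> mcar M \<Longrightarrow> \<exists>y\<in>mcar M. madd M x y = mzero M" unfolding is_amod_def by blast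
lemma am_dist1: "is_amod M \<Longrightarrow> x \<in> mcar M \<Longrightarrow> y \<in> mcar M \<Longrightarrow> mact M a (madd M x y) = madd M (mact M a x) (mact M a y)" unfolding is_amod_def by blast
lemma am_dist2: "is_amod M \<Longrightarrow> x \<in> mcar M \<Longrightarrow> mact M (a + b) x = madd M (mact M a x) (mact M b x)" unfolding is_amod_def by blast
lemma am_mult: "is_amod M \<Longrightarrow> x \<in> mcar M \<Longrightarrow> mact M (a * b) x = mact M a (mact M b x)" unfolding is_amod_def by blast
lemma am_one: "is_amod M \<Longrightarrow> x \<in> mcar M \<Longrightarrow> mact M 1 x = x" unfolding is_amod_def by blast

lemma am_rzero: "is_amod M \<Longrightarrow> x \<in> mcar M \<Longrightarrow> madd M x (mzero M) = x"
  by (metis am_comm am_lzero am_zero)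

lemma am_lcomm: "is_amod M \<Longrightarrow> x \<in> mcar M \<Longrightarrow> y \<in> mcar M \<Longrightarrow> z \<in> mcar M \<Longrightarrow> madd M x (madd M y z) = madd M y (madd M x z)"
  by (metis am_assoc am_comm)

lemma am_swap4: "is_amod M \<Longrightarrow> a \<in> mcar M \<Longrightarrow> b \<in> mcar M \<Longrightarrow> c \<in> mcar M \<Longrightarrow> d \<in> mcar M \<Longrightarrow>
   madd M (madd M a b) (madd M c d) = madd M (madd M a c) (madd M b d)"
  by (metis am_assoc am_lcomm am_add)

lemma am_cancel: assumes M: "is_amod M" and x: "x \<in> mcar M" and y: "y \<in> mcar M" and z: "z \<in> mcar M"
  and e: "madd M x z = madd M y z" shows "x = y"
proof -
  obtain w where w: "w \<in> mcar M" "madd M z w = mzero M" using am_inv[OF M z] by blast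
  have "x = madd M (madd M x z) w" using M x z w by (simp add: am_assoc am_rzero)
  also have "\<dots> = madd M (madd M y z) w" using e by simp
  also have "\<dots> = y" using M y z w by (simp add: am_assoc am_rzero)
  finally show ?thesis .
qed

lemma am_idem_zero: assumes M: "is_amod M" and x: "x \<in> mcar M" and e: "madd M x x = x" shows "x = mzero M"
  using am_cancel[OF M x am_zero[OF M] x] e M x by (simp add: am_lzero)

lemma am_act0: assumes M: "is_amod M" and x: "x \<in> mcar M" shows "mact M 0 x = mzero M"
  using am_idem_zero[OF M am_act[OF M x]] am_dist2[OF M x, of 0 0] by simp

lemma am_act_zero: assumes M: "is_amod M" shows "mact M a (mzero M) = mzero M"
  using am_idem_zero[OF M am_act[OF M am_zero[OF M]]] am_dist1[OF M am_zero[OF M] am_zero[OF M], of a]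
    am_lzero[OF M am_zero[OF M]] by simp

lemma am_neg: assumes M: "is_amod M" and x: "x \<in> mcar M" shows "madd M x (mact M (-1) x) = mzero M"
proof -
  have "madd M x (mact M (-1) x) = madd M (mact M 1 x) (mact M (-1) x)" using am_one[OF M x] by simp
  also have "\<dots> = mact M (1 + -1) x" using am_dist2[OF M x, of 1 "-1"] by simp
  finally show ?thesis using am_act0[OF M x] by simp
qed

lemma am_sub_eq: assumes M: "is_amod M" and x: "x \<in> mcar M" and y: "y \<in> mcar M"
  and e: "madd M y (mact M (-1) x) = mzero M" shows "y = x"
proof -
  have "y = madd M y (madd M (mact M (-1) x) x)" using am_neg[OF M x] am_comm[OF M x am_act[OF M x]] M y x
    by (simp add: am_rzero am_act)
  also have "\<dots> = x" using M x y e by (simp add: am_assoc[symmetric] am_act am_lzero)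
  finally show ?thesis .
qed

lemma ahom_car: "ahom M N g \<Longrightarrow> x \<in> mcar M \<Longrightarrow> g x \<in> mcar N" by (simp add: ahom_def)
lemma ahom_add: "ahom M N g \<Longrightarrow> x \<in> mcar M \<Longrightarrow> y \<in> mcar M \<Longrightarrow> g (madd M x y) = madd N (g x) (g y)" by (simp add: ahom_def)
lemma ahom_act: "ahom M N g \<Longrightarrow> x \<in> mcar M \<Longrightarrow> g (mact M a x) = mact N a (g x)" by (simp add: ahom_def)

lemma ahom_zero: assumes M: "is_amod M" and N: "is_amod N" and g: "ahom M N g" shows "g (mzero M) = mzero N"
  using am_act0[OF M am_zero[OF M]] ahom_act[OF g am_zero[OF M], of 0] am_act0[OF N ahom_car[OF g am_zero[OF M]]]
  by simp

lemma ahom_comp: "ahom M N g \<Longrightarrow> ahom N Q h \<Longrightarrow> ahom M Q (\<lambda>x. h (g x))"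
  by (simp add: ahom_def)



lemma lc_car: "is_amod M \<Longrightarrow> snd ` set xs \<subseteq> mcar M \<Longrightarrow> lincomb M xs \<in> mcar M"
  by (induction xs) (auto simp: am_zero am_add am_act)

lemma lc_hom: assumes M: "is_amod M" and N: "is_amod N" and g: "ahom M N g"
  shows "snd ` set xs \<subseteq> mcar M \<Longrightarrow> g (lincomb M xs) = lincomb N (map (\<lambda>(a,x). (a, g x)) xs)"
proof (induction xs)
  case Nil thus ?case using ahom_zero[OF M N g] by simp
next
  case (Cons p xs) thus ?case
    by (cases p) (auto simp: ahom_add[OF g] ahom_act[OF g] lc_car[OF M] am_act[OF M])
qed

lemma lc_append: assumes M: "is_amod M"
  shows "snd ` set xs \<subseteq> mcar M \<Longrightarrow> snd ` set ys \<subseteq> mcar M \<Longrightarrow>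
    lincomb M (xs @ ys) = madd M (lincomb M xs) (lincomb M ys)"
proof (induction xs)
  case Nil thus ?case using M lc_car[OF M] by (simp add: am_lzero)
next
  case (Cons p xs) thus ?case
    by (cases p) (auto simp: am_assoc[OF M] lc_car[OF M] am_act[OF M])
qed

lemma lc_addc: assumes M: "is_amod M"
  shows "y ` set js \<subseteq> mcar M \<Longrightarrow> lincomb M (map (\<lambda>j. (a j + b j, y j)) js) =
     madd M (lincomb M (map (\<lambda>j. (a j, y j)) js)) (lincomb M (map (\<lambda>j. (b j, y j)) js))"
proof (induction js)
  case Nil thus ?case using M by (simp add: am_lzero am_zero)
next
  case (Cons j js)
  have c: "lincomb M (map (\<lambda>j. (c j, y j)) js) \<in> mcar M" for c
    using Cons.prems by (intro lc_car[OF M]) auto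
  from Cons show ?case
    by (auto simp: am_dist2[OF M] am_swap4[OF M] am_act[OF M] c)
qed

lemma lc_mulc: assumes M: "is_amod M"
  shows "y ` set js \<subseteq> mcar M \<Longrightarrow> lincomb M (map (\<lambda>j. (c * a j, y j)) js) =
     mact M c (lincomb M (map (\<lambda>j. (a j, y j)) js))"
proof (induction js)
  case Nil thus ?case using M by (simp add: am_act_zero)
next
  case (Cons j js)
  have d: "lincomb M (map (\<lambda>j. (a j, y j)) js) \<in> mcar M"
    using Cons.prems by (intro lc_car[OF M]) auto
  from Cons show ?case
    by (auto simp: am_dist1[OF M] am_mult[OF M] am_act[OF M] d)
qed

lemma lc_upd: "lincomb (M\<lparr>mcar := S\<rparr>) xs = lincomb M xs"
  by (induction xs) auto

lemma lc_reg: "lincomb reg_mod xs = sum_list (map (\<lambda>(a,x). a * x) xs)"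
  by (induction xs) (auto simp: reg_mod_def)

lemma lc_free: "lincomb (free_mod n) xs = (\<lambda>t. sum_list (map (\<lambda>(a,v). a * v t) xs))"
  by (induction xs) (auto simp: free_mod_def)

lemma lc_nak: "lincomb (nak emb P) xs h =
   (\<Sum>(a,\<phi>)\<leftarrow>xs. (if h \<in> homA P then \<phi> (\<lambda>p. h p * a) else 0))"
  by (induction xs) (auto simp: nak_def)

definition ev :: "nat \<Rightarrow> nat \<Rightarrow> 'a::ring_1" where "ev j = (\<lambda>t. if t = j then 1 else 0)"

lemma ev_car: "j < n \<Longrightarrow> ev j \<in> mcar (free_mod n)" by (simp add: ev_def free_mod_def)

lemma free_is_amod: "is_amod (free_mod n :: ('a::ring_1, nat \<Rightarrow> 'a) amod)"
  unfolding is_amod_def free_mod_def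
  apply (auto simp: algebra_simps)
  subgoal for x by (rule exI[of _ "\<lambda>i. - x i"]) auto
  done

lemma reg_is_amod: "is_amod (reg_mod :: ('a::ring_1, 'a) amod)"
  unfolding is_amod_def reg_mod_def
  by (auto simp: algebra_simps intro: exI[of _ "- _"])

lemma free_expand: assumes v: "v \<in> mcar (free_mod n)"
  shows "lincomb (free_mod n) (map (\<lambda>j. (v j, ev j)) [0..<n]) = (v :: nat \<Rightarrow> 'a::ring_1)"
proof
  fix t
  have "(\<Sum>j\<leftarrow>[0..<n]. v j * ev j t) = (\<Sum>j\<in>{0..<n}. v j * ev j t)"
    by (simp add: interv_sum_list_conv_sum_set_nat)
  also have "\<dots> = (if t < n then v t else 0)" by (simp add: ev_def if_distrib[of "(*) _"] sum.delta cong: if_cong)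
  also have "\<dots> = v t" using v by (auto simp: free_mod_def)
  finally show "lincomb (free_mod n) (map (\<lambda>j. (v j, ev j)) [0..<n]) t = v t"
    by (simp add: lc_free o_def)
qed

lemma proj_expand: assumes P: "is_amod P" and i: "ahom P (free_mod n) i" and r: "ahom (free_mod n) P r"
  and ri: "\<forall>x\<in>mcar P. r (i x) = x" and x: "x \<in> mcar P"
  shows "x = lincomb P (map (\<lambda>j. (i x j, r (ev j))) [0..<n])"
proof -
  have ix: "i x \<in> mcar (free_mod n)" using ahom_car[OF i x] .
  have "x = r (i x)" using ri x by simp
  also have "\<dots> = r (lincomb (free_mod n) (map (\<lambda>j. (i x j, ev j)) [0..<n]))"
    using free_expand[OF ix] by simp
  also have "\<dots> = lincomb P (map (\<lambda>(a,y). (a, r y)) (map (\<lambda>j. (i x j, ev j)) [0..<n]))"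
    by (rule lc_hom[OF free_is_amod P r]) (auto simp: ev_car)
  finally show ?thesis by (simp add: o_def)
qed



definition cosf :: "('a, 'p1) amod \<Rightarrow> ('a, 'p0) amod \<Rightarrow> ('p1 \<Rightarrow> 'p0) \<Rightarrow> 'p0 \<Rightarrow> 'p0 set" where
  "cosf P1 P0 f x = {madd P0 x (f p) | p. p \<in> mcar P1}"

lemma cok_car: "mcar (coker_mod P1 P0 f) = {cosf P1 P0 f x | x. x \<in> mcar P0}"
  by (auto simp: coker_mod_def cosf_def Let_def)
lemma cok_add: "madd (coker_mod P1 P0 f) S T = {madd P0 s t | s t. s \<in> S \<and> t \<in> T}"
  by (simp add: coker_mod_def Let_def)
lemma cok_act: "mact (coker_mod P1 P0 f) a S = {madd P0 (mact P0 a s) (f p) | s p. s \<in> S \<and> p \<in> mcar P1}"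
  by (auto simp: coker_mod_def Let_def)
lemma cok_zero: "mzero (coker_mod P1 P0 f) = cosf P1 P0 f (mzero P0)"
  by (auto simp: coker_mod_def cosf_def Let_def)

lemma f_zero: "is_amod P1 \<Longrightarrow> is_amod P0 \<Longrightarrow> ahom P1 P0 f \<Longrightarrow> f (mzero P1) = mzero P0"
  by (rule ahom_zero)

lemma cos_self: assumes P1: "is_amod P1" and P0: "is_amod P0" and f: "ahom P1 P0 f" and x: "x \<in> mcar P0"
  shows "x \<in> cosf P1 P0 f x"
  unfolding cosf_def using am_zero[OF P1] f_zero[OF P1 P0 f] am_rzero[OF P0 x] by force

lemma cos_sub: assumes P1: "is_amod P1" and P0: "is_amod P0" and f: "ahom P1 P0 f" and x: "x \<in> mcar P0"
  shows "cosf P1 P0 f x \<subseteq> mcar P0"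
  unfolding cosf_def using P0 x ahom_car[OF f] by (auto intro: am_add)

lemma cos_add: assumes P1: "is_amod P1" and P0: "is_amod P0" and f: "ahom P1 P0 f"
  and x: "x \<in> mcar P0" and y: "y \<in> mcar P0"
  shows "cosf P1 P0 f (madd P0 x y) = madd (coker_mod P1 P0 f) (cosf P1 P0 f x) (cosf P1 P0 f y)"
proof (rule set_eqI, rule iffI)
  fix z assume "z \<in> cosf P1 P0 f (madd P0 x y)"
  then obtain p where p: "p \<in> mcar P1" "z = madd P0 (madd P0 x y) (f p)" by (auto simp: cosf_def)
  have fp: "f p \<in> mcar P0" using ahom_car[OF f p(1)] .
  have "z = madd P0 (madd P0 x (f p)) (madd P0 y (f (mzero P1)))"
    using p fp x y P0 by (simp add: f_zero[OF P1 P0 f] am_rzero am_assoc am_comm[OF P0 y fp])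
  moreover have "madd P0 x (f p) \<in> cosf P1 P0 f x" "madd P0 y (f (mzero P1)) \<in> cosf P1 P0 f y"
    using p am_zero[OF P1] by (auto simp: cosf_def)
  ultimately show "z \<in> madd (coker_mod P1 P0 f) (cosf P1 P0 f x) (cosf P1 P0 f y)"
    by (auto simp: cok_add)
next
  fix z assume "z \<in> madd (coker_mod P1 P0 f) (cosf P1 P0 f x) (cosf P1 P0 f y)"
  then obtain p q where pq: "p \<in> mcar P1" "q \<in> mcar P1" "z = madd P0 (madd P0 x (f p)) (madd P0 y (f q))"
    by (auto simp: cok_add cosf_def)
  have "z = madd P0 (madd P0 x y) (f (madd P1 p q))"
    using pq x y P0 ahom_car[OF f] by (simp add: ahom_add[OF f] am_swap4)
  thus "z \<in> cosf P1 P0 f (madd P0 x y)" using pq am_add[OF P1] by (auto simp: cosf_def)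
qed

lemma cos_act: assumes P1: "is_amod P1" and P0: "is_amod P0" and f: "ahom P1 P0 f"
  and x: "x \<in> mcar P0"
  shows "cosf P1 P0 f (mact P0 a x) = mact (coker_mod P1 P0 f) a (cosf P1 P0 f x)"
proof (rule set_eqI, rule iffI)
  fix z assume "z \<in> cosf P1 P0 f (mact P0 a x)"
  then obtain p where p: "p \<in> mcar P1" "z = madd P0 (mact P0 a x) (f p)" by (auto simp: cosf_def)
  have "z = madd P0 (mact P0 a (madd P0 x (f (mzero P1)))) (f p)"
    using p x P0 by (simp add: f_zero[OF P1 P0 f] am_rzero)
  moreover have "madd P0 x (f (mzero P1)) \<in> cosf P1 P0 f x"
    using am_zero[OF P1] by (auto simp: cosf_def)
  ultimately show "z \<in> mact (coker_mod P1 P0 f) a (cosf P1 P0 f x)"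
    using p by (auto simp: cok_act)
next
  fix z assume "z \<in> mact (coker_mod P1 P0 f) a (cosf P1 P0 f x)"
  then obtain p q where pq: "p \<in> mcar P1" "q \<in> mcar P1" "z = madd P0 (mact P0 a (madd P0 x (f p))) (f q)"
    by (auto simp: cok_act cosf_def)
  have "z = madd P0 (mact P0 a x) (f (madd P1 (mact P1 a p) q))"
    using pq x P0 P1 ahom_car[OF f] by (simp add: ahom_add[OF f] ahom_act[OF f] am_dist1 am_assoc am_act)
  thus "z \<in> cosf P1 P0 f (mact P0 a x)" using pq am_add[OF P1] am_act[OF P1] by (auto simp: cosf_def)
qed

lemma cos_f: assumes P1: "is_amod P1" and P0: "is_amod P0" and f: "ahom P1 P0 f"
  and p: "p \<in> mcar P1"
  shows "cosf P1 P0 f (f p) = cosf P1 P0 f (mzero P0)"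
proof (rule set_eqI, rule iffI)
  fix z assume "z \<in> cosf P1 P0 f (f p)"
  then obtain q where q: "q \<in> mcar P1" "z = madd P0 (f p) (f q)" by (auto simp: cosf_def)
  have "z = madd P0 (mzero P0) (f (madd P1 p q))"
    using p q P1 P0 ahom_car[OF f] by (simp add: ahom_add[OF f] am_lzero am_add)
  thus "z \<in> cosf P1 P0 f (mzero P0)" using p q am_add[OF P1] by (auto simp: cosf_def)
next
  fix z assume "z \<in> cosf P1 P0 f (mzero P0)"
  then obtain q where q: "q \<in> mcar P1" "z = madd P0 (mzero P0) (f q)" by (auto simp: cosf_def)
  let ?r = "madd P1 (mact P1 (-1) p) q"
  have r: "?r \<in> mcar P1" using p q P1 by (simp add: am_add am_act)
  have "z = madd P0 (f p) (f ?r)"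
    using p q P1 P0 ahom_car[OF f]
    by (simp add: ahom_add[OF f] ahom_act[OF f] am_lzero am_act am_assoc[symmetric] am_neg)
  thus "z \<in> cosf P1 P0 f (f p)" using r by (auto simp: cosf_def)
qed

definition injP :: "('a::ring_1, 'p1) amod \<Rightarrow> ('a, 'p0) amod \<Rightarrow> ('p1 \<Rightarrow> 'p0) \<Rightarrow> ('a, 'x) amod \<Rightarrow> bool" where
  "injP P1 P0 f X \<longleftrightarrow> (\<forall>v. ahom P0 X v \<and> (\<forall>p\<in>mcar P1. v (f p) = mzero X) \<longrightarrow> (\<forall>x\<in>mcar P0. v x = mzero X))"

definition surjP :: "('a::ring_1, 'p1) amod \<Rightarrow> ('a, 'p0) amod \<Rightarrow> ('p1 \<Rightarrow> 'p0) \<Rightarrow> ('a, 'x) amod \<Rightarrow> bool" where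
  "surjP P1 P0 f X \<longleftrightarrow> (\<forall>u. ahom P1 X u \<longrightarrow> (\<exists>v. ahom P0 X v \<and> (\<forall>p\<in>mcar P1. u p = v (f p))))"

lemma some_const: "z \<in> Z \<Longrightarrow> \<forall>z\<in>Z. v z = c \<Longrightarrow> v (SOME z. z \<in> Z) = c"
  by (metis someI)

lemma F_imp_inj: assumes P1: "is_amod P1" and P0: "is_amod P0" and f: "ahom P1 P0 f" and X: "is_amod X"
  and F: "Fbar P1 P0 f X" shows "injP P1 P0 f X"
  unfolding injP_def
proof (intro allI impI ballI)
  fix v x assume vv: "ahom P0 X v \<and> (\<forall>p\<in>mcar P1. v (f p) = mzero X)" and x: "x \<in> mcar P0"
  hence v: "ahom P0 X v" and vf: "\<And>p. p \<in> mcar P1 \<Longrightarrow> v (f p) = mzero X" by auto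
  define g where "g S = v (SOME z. z \<in> S)" for S
  have cosv: "\<And>x z. x \<in> mcar P0 \<Longrightarrow> z \<in> cosf P1 P0 f x \<Longrightarrow> v z = v x"
    using vf ahom_car[OF v] ahom_car[OF f] X by (auto simp: cosf_def ahom_add[OF v] am_rzero)
  have gcos: "g (cosf P1 P0 f x) = v x" if "x \<in> mcar P0" for x
    unfolding g_def by (rule some_const[OF cos_self[OF P1 P0 f that]]) (use cosv that in auto)
  have "ahom (coker_mod P1 P0 f) X g"
    unfolding ahom_def
  proof (intro conjI ballI allI)
    fix S assume "S \<in> mcar (coker_mod P1 P0 f)"
    then obtain x where "x \<in> mcar P0" "S = cosf P1 P0 f x" by (auto simp: cok_car)
    thus "g S \<in> mcar X" using gcos ahom_car[OF v] by simp
  next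
    fix S T assume "S \<in> mcar (coker_mod P1 P0 f)" "T \<in> mcar (coker_mod P1 P0 f)"
    then obtain x y where xy: "x \<in> mcar P0" "S = cosf P1 P0 f x" "y \<in> mcar P0" "T = cosf P1 P0 f y"
      by (auto simp: cok_car)
    thus "g (madd (coker_mod P1 P0 f) S T) = madd X (g S) (g T)"
      by (simp add: cos_add[OF P1 P0 f xy(1,3), symmetric] gcos am_add[OF P0] ahom_add[OF v])
  next
    fix a S assume "S \<in> mcar (coker_mod P1 P0 f)"
    then obtain x where xy: "x \<in> mcar P0" "S = cosf P1 P0 f x" by (auto simp: cok_car)
    thus "g (mact (coker_mod P1 P0 f) a S) = mact X a (g S)"
      by (simp add: cos_act[OF P1 P0 f xy(1), symmetric] gcos am_act[OF P0] ahom_act[OF v])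
  qed
  hence "\<forall>c\<in>mcar (coker_mod P1 P0 f). g c = mzero X" using F by (simp add: Fbar_def)
  hence "g (cosf P1 P0 f x) = mzero X" using x by (auto simp: cok_car)
  thus "v x = mzero X" using gcos x by simp
qed

lemma inj_imp_F: assumes P1: "is_amod P1" and P0: "is_amod P0" and f: "ahom P1 P0 f" and X: "is_amod X"
  and M: "in_modA X" and I: "injP P1 P0 f X" shows "Fbar P1 P0 f X"
  unfolding Fbar_def
proof (intro conjI M allI impI ballI)
  fix g S assume g: "ahom (coker_mod P1 P0 f) X g" and S: "S \<in> mcar (coker_mod P1 P0 f)"
  define v where "v x = g (cosf P1 P0 f x)" for x
  have cc: "x \<in> mcar P0 \<Longrightarrow> cosf P1 P0 f x \<in> mcar (coker_mod P1 P0 f)" for x by (auto simp: cok_car)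
  have v: "ahom P0 X v" unfolding ahom_def v_def
    using cc ahom_car[OF g] ahom_add[OF g] ahom_act[OF g] cos_add[OF P1 P0 f] cos_act[OF P1 P0 f]
    by simp
  have z: "g (mzero (coker_mod P1 P0 f)) = mzero X"
  proof -
    have "madd (coker_mod P1 P0 f) (mzero (coker_mod P1 P0 f)) (mzero (coker_mod P1 P0 f)) = mzero (coker_mod P1 P0 f)"
      using cos_add[OF P1 P0 f am_zero[OF P0] am_zero[OF P0]] am_lzero[OF P0 am_zero[OF P0]]
      by (simp add: cok_zero)
    moreover have "g (madd (coker_mod P1 P0 f) (mzero (coker_mod P1 P0 f)) (mzero (coker_mod P1 P0 f))) = madd X (g (mzero (coker_mod P1 P0 f))) (g (mzero (coker_mod P1 P0 f)))"
      using ahom_add[OF g] cc[OF am_zero[OF P0]] by (simp add: cok_zero)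
    ultimately have "madd X (g (mzero (coker_mod P1 P0 f))) (g (mzero (coker_mod P1 P0 f))) = g (mzero (coker_mod P1 P0 f))"
      by simp
    thus ?thesis using am_idem_zero[OF X] ahom_car[OF g] cc[OF am_zero[OF P0]] by (simp add: cok_zero)
  qed
  have "\<forall>p\<in>mcar P1. v (f p) = mzero X"
    using cos_f[OF P1 P0 f] z by (simp add: v_def cok_zero)
  hence "\<forall>x\<in>mcar P0. v x = mzero X" using I v by (simp add: injP_def)
  thus "g S = mzero X" using S by (auto simp: cok_car v_def)
qed



definition kvs :: "'v set \<Rightarrow> ('v \<Rightarrow> 'v \<Rightarrow> 'v) \<Rightarrow> 'v \<Rightarrow> ('k::field \<Rightarrow> 'v \<Rightarrow> 'v) \<Rightarrow> bool" where
  "kvs V ad z sc \<longleftrightarrow> z \<in> V \<and> (\<forall>x\<in>V. \<forall>y\<in>V. ad x y \<in> V) \<and> (\<forall>c. \<forall>x\<in>V. sc c x \<in> V) \<and>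
     (\<forall>x\<in>V. \<forall>y\<in>V. \<forall>w\<in>V. ad (ad x y) w = ad x (ad y w)) \<and>
     (\<forall>x\<in>V. \<forall>y\<in>V. ad x y = ad y x) \<and> (\<forall>x\<in>V. ad z x = x) \<and>
     (\<forall>c. \<forall>x\<in>V. \<forall>y\<in>V. sc c (ad x y) = ad (sc c x) (sc c y)) \<and>
     (\<forall>c d. \<forall>x\<in>V. sc (c + d) x = ad (sc c x) (sc d x)) \<and>
     (\<forall>c d. \<forall>x\<in>V. sc (c * d) x = sc c (sc d x)) \<and>
     (\<forall>x\<in>V. sc 1 x = x) \<and> (\<forall>x\<in>V. sc 0 x = z)"

definition subsp :: "'v set \<Rightarrow> ('v \<Rightarrow> 'v \<Rightarrow> 'v) \<Rightarrow> 'v \<Rightarrow> ('k::field \<Rightarrow> 'v \<Rightarrow> 'v) \<Rightarrow> bool" where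
  "subsp U ad z sc \<longleftrightarrow> z \<in> U \<and> (\<forall>x\<in>U. \<forall>y\<in>U. ad x y \<in> U) \<and> (\<forall>c. \<forall>x\<in>U. sc c x \<in> U)"

lemma sep_functional:
  fixes sc :: "'k::field \<Rightarrow> 'v \<Rightarrow> 'v"
  assumes K: "kvs V ad z sc" and W: "subsp W ad z sc" "W \<subseteq> V" and u: "u \<in> V" "u \<notin> W"
  shows "\<exists>lam. (\<forall>x\<in>V. \<forall>y\<in>V. lam (ad x y) = lam x + lam y) \<and> (\<forall>c. \<forall>x\<in>V. lam (sc c x) = c * lam x)
          \<and> (\<forall>w\<in>W. lam w = 0) \<and> lam u = 1"
proof -
  note kd = K[unfolded kvs_def]
  have zV: "z \<in> V" and adV: "\<And>x y. x \<in> V \<Longrightarrow> y \<in> V \<Longrightarrow> ad x y \<in> V"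
    and scV: "\<And>c x. x \<in> V \<Longrightarrow> sc c x \<in> V"
    and as: "\<And>x y w. x \<in> V \<Longrightarrow> y \<in> V \<Longrightarrow> w \<in> V \<Longrightarrow> ad (ad x y) w = ad x (ad y w)"
    and cm: "\<And>x y. x \<in> V \<Longrightarrow> y \<in> V \<Longrightarrow> ad x y = ad y x"
    and lz: "\<And>x. x \<in> V \<Longrightarrow> ad z x = x"
    and d1: "\<And>c x y. x \<in> V \<Longrightarrow> y \<in> V \<Longrightarrow> sc c (ad x y) = ad (sc c x) (sc c y)"
    and d2: "\<And>c d x. x \<in> V \<Longrightarrow> sc (c + d) x = ad (sc c x) (sc d x)"
    and ml: "\<And>c d x. x \<in> V \<Longrightarrow> sc (c * d) x = sc c (sc d x)"
    and on: "\<And>x. x \<in> V \<Longrightarrow> sc 1 x = x"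
    and ze: "\<And>x. x \<in> V \<Longrightarrow> sc 0 x = z"
    using kd by meson+
  have rz: "\<And>x. x \<in> V \<Longrightarrow> ad x z = x" using cm lz zV by metis
  have sz: "\<And>c. sc c z = z" using ze[OF zV] ml[OF zV] by (metis mult_zero_right)
  have neg: "\<And>x. x \<in> V \<Longrightarrow> ad x (sc (-1) x) = z"
    using d2 on ze by (metis add.right_inverse)
  have lc: "\<And>x y w. x \<in> V \<Longrightarrow> y \<in> V \<Longrightarrow> w \<in> V \<Longrightarrow> ad x (ad y w) = ad y (ad x w)"
    using as cm by metis
  have sw4: "\<And>a b c d. a \<in> V \<Longrightarrow> b \<in> V \<Longrightarrow> c \<in> V \<Longrightarrow> d \<in> V \<Longrightarrow> ad (ad a b) (ad c d) = ad (ad a c) (ad b d)"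
    using as lc adV by metis
  define S where "S = {U. W \<subseteq> U \<and> U \<subseteq> V \<and> subsp U ad z sc \<and> u \<notin> U}"
  have "\<exists>M\<in>S. \<forall>X\<in>S. M \<subseteq> X \<longrightarrow> X = M"
  proof (rule subset_Zorn_nonempty)
    show "S \<noteq> {}" using W u unfolding S_def by blast
  next
    fix C assume C: "C \<noteq> {}" "subset.chain S C"
    hence CS: "C \<subseteq> S" and ch: "\<And>A B. A \<in> C \<Longrightarrow> B \<in> C \<Longrightarrow> A \<subseteq> B \<or> B \<subseteq> A"
      by (auto simp: pred_on.chain_def)
    show "\<Union>C \<in> S" unfolding S_def subsp_def
    proof (intro CollectI conjI ballI allI)
      show "W \<subseteq> \<Union>C" using C(1) CS S_def by blast
      show "\<Union>C \<subseteq> V" using CS S_def by blast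
      show "z \<in> \<Union>C" using C(1) CS by (auto simp: S_def subsp_def)
      show "u \<notin> \<Union>C" using CS by (auto simp: S_def)
      fix x y assume "x \<in> \<Union>C" "y \<in> \<Union>C"
      then obtain A B where AB: "A \<in> C" "B \<in> C" "x \<in> A" "y \<in> B" by auto
      show "ad x y \<in> \<Union>C"
        using ch[OF AB(1,2)] AB CS unfolding S_def subsp_def by blast
    next
      fix c x assume "x \<in> \<Union>C"
      then obtain A where "A \<in> C" "x \<in> A" by auto
      thus "sc c x \<in> \<Union>C" using CS unfolding S_def subsp_def by blast
    qed
  qed
  then obtain M where MS: "M \<in> S" and Mmax: "\<And>X. X \<in> S \<Longrightarrow> M \<subseteq> X \<Longrightarrow> X = M" by blast
  have WM: "W \<subseteq> M" and MV: "M \<subseteq> V" and uM: "u \<notin> M" and zM: "z \<in> M"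
    and adM: "\<And>x y. x \<in> M \<Longrightarrow> y \<in> M \<Longrightarrow> ad x y \<in> M" and scM: "\<And>c x. x \<in> M \<Longrightarrow> sc c x \<in> M"
    using MS unfolding S_def subsp_def by blast+
  have ex: "\<exists>c. ad v (sc (- c) u) \<in> M" if v: "v \<in> V" for v
  proof (rule ccontr)
    assume nex: "\<not> ?thesis"
    define M' where "M' = {ad w (sc a v) | w a. w \<in> M}"
    have M'V: "M' \<subseteq> V" using MV v adV scV unfolding M'_def by blast
    have MM': "M \<subseteq> M'"
    proof
      fix w assume "w \<in> M" thus "w \<in> M'" unfolding M'_def using ze[OF v] rz MV
        by (auto intro!: exI[of _ w] exI[of _ 0])
    qed
    have sub': "subsp M' ad z sc" unfolding subsp_def
    proof (intro conjI ballI allI)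
      show "z \<in> M'" using MM' zM by blast
      fix x y assume "x \<in> M'" "y \<in> M'"
      then obtain w1 a1 w2 a2 where "w1 \<in> M" "w2 \<in> M" "x = ad w1 (sc a1 v)" "y = ad w2 (sc a2 v)"
        unfolding M'_def by blast
      moreover have "ad (ad w1 (sc a1 v)) (ad w2 (sc a2 v)) = ad (ad w1 w2) (sc (a1 + a2) v)"
        using calculation MV v by (simp add: d2 sw4 scV subsetD)
      ultimately show "ad x y \<in> M'" unfolding M'_def using adM by blast
    next
      fix c x assume "x \<in> M'"
      then obtain w a where "w \<in> M" "x = ad w (sc a v)" unfolding M'_def by blast
      moreover have "sc c (ad w (sc a v)) = ad (sc c w) (sc (c * a) v)"
        using calculation MV v by (simp add: d1 ml scV subsetD)
      ultimately show "sc c x \<in> M'" unfolding M'_def using scM by blast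
    qed
    have uM': "u \<notin> M'"
    proof
      assume "u \<in> M'"
      then obtain w a where w: "w \<in> M" "u = ad w (sc a v)" unfolding M'_def by blast
      have wV: "w \<in> V" using w MV by blast
      show False
      proof (cases "a = 0")
        case True thus False using w uM ze[OF v] rz[OF wV] by simp
      next
        case False
        have e1: "sc (- (1/a)) (sc a v) = sc (-1) v" using ml[OF v, of "-(1/a)" a, symmetric] False v by simp
        have "ad v (sc (- (1/a)) u) = ad v (ad (sc (- (1/a)) w) (sc (- (1/a)) (sc a v)))"
          using w wV v by (simp add: d1 scV)
        also have "\<dots> = ad v (ad (sc (- (1/a)) w) (sc (-1) v))" using e1 by simp
        also have "\<dots> = sc (- (1/a)) w"
          using wV v neg scV lc rz by (metis)
        finally have "ad v (sc (- (1/a)) u) \<in> M" using scM w by simp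
        thus False using nex by blast
      qed
    qed
    have "M' = M" using Mmax[of M'] M'V MM' sub' uM' WM unfolding S_def by blast
    moreover have "v \<in> M'" unfolding M'_def using zM lz[OF v] on[OF v]
      by (auto intro!: exI[of _ z] exI[of _ 1])
    ultimately have "ad v (sc (- 0) u) \<in> M" using ze[OF u(1)] rz[OF v] by simp
    thus False using nex by blast
  qed
  have uniq: "c = d" if v: "v \<in> V" and c: "ad v (sc (- c) u) \<in> M" and d: "ad v (sc (- d) u) \<in> M" for v c d
  proof (rule ccontr)
    assume cd: "c \<noteq> d"
    have "ad (ad v (sc (- d) u)) (sc (-1) (ad v (sc (- c) u))) = ad (ad v (sc (-1) v)) (ad (sc (- d) u) (sc c u))"
      using v u ml[OF u(1), of "-1" "- c", symmetric] by (simp add: d1 scV adV as lc)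
    also have "\<dots> = sc (c - d) u" using v u neg lz[OF adV[OF scV[OF u(1)] scV[OF u(1)]]] d2[OF u(1), of "- d" c] by simp
    finally have "sc (c - d) u \<in> M" using adM scM c d by metis
    hence "sc (1 / (c - d)) (sc (c - d) u) \<in> M" using scM by blast
    hence "u \<in> M" using cd ml[OF u(1)] on[OF u(1)] by (metis divide_self_if right_minus_eq times_divide_eq_left mult_1)
    thus False using uM by blast
  qed
  define lam where "lam v = (THE c. ad v (sc (- c) u) \<in> M)" for v
  have lamI: "ad v (sc (- lam v) u) \<in> M" if "v \<in> V" for v
    unfolding lam_def by (rule theI') (use ex[OF that] uniq[OF that] in blast)
  have lam_eq: "lam v = c" if "v \<in> V" "ad v (sc (- c) u) \<in> M" for v c
    using uniq[OF that(1) lamI[OF that(1)] that(2)] .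
  show ?thesis
  proof (intro exI conjI ballI allI)
    fix x y assume x: "x \<in> V" and y: "y \<in> V"
    have "ad (ad x y) (sc (- (lam x + lam y)) u) = ad (ad x (sc (- lam x) u)) (ad y (sc (- lam y) u))"
      using x y u by (simp add: d2[OF u(1), of "- lam x" "- lam y", simplified] scV adV as lc)
    hence "ad (ad x y) (sc (- (lam x + lam y)) u) \<in> M" using adM lamI x y by simp
    thus "lam (ad x y) = lam x + lam y" using lam_eq adV x y by blast
  next
    fix c x assume x: "x \<in> V"
    have "sc c (ad x (sc (- lam x) u)) = ad (sc c x) (sc (- (c * lam x)) u)"
      using x u by (simp add: d1 ml[symmetric] scV)
    hence "ad (sc c x) (sc (- (c * lam x)) u) \<in> M" using scM lamI x by metis
    thus "lam (sc c x) = c * lam x" using lam_eq scV x by blast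
  next
    fix w assume w: "w \<in> W"
    hence "ad w (sc (- 0) u) \<in> M" using WM u ze rz MV by (auto simp: subset_iff)
    thus "lam w = 0" using lam_eq w WM MV by blast
  next
    have "ad u (sc (- 1) u) \<in> M" using neg u zM by simp
    thus "lam u = 1" using lam_eq u by blast
  qed
qed



lemma homA_I: "ahom P reg_mod h \<Longrightarrow> (\<forall>p. p \<notin> mcar P \<longrightarrow> h p = 0) \<Longrightarrow> h \<in> homA P"
  by (simp add: homA_def)
lemma homA_add: "h \<in> homA P \<Longrightarrow> p \<in> mcar P \<Longrightarrow> q \<in> mcar P \<Longrightarrow> h (madd P p q) = h p + h q"
  by (simp add: homA_def ahom_def reg_mod_def)
lemma homA_act: "h \<in> homA P \<Longrightarrow> p \<in> mcar P \<Longrightarrow> h (mact P a p) = a * h p"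
  by (simp add: homA_def ahom_def reg_mod_def)
lemma homA_out: "h \<in> homA P \<Longrightarrow> p \<notin> mcar P \<Longrightarrow> h p = 0"
  by (simp add: homA_def)
lemma homA_ahom: "h \<in> homA P \<Longrightarrow> ahom P reg_mod h"
  by (simp add: homA_def)

lemma homA_sum2: "h \<in> homA P \<Longrightarrow> h' \<in> homA P \<Longrightarrow> (\<lambda>p. h p + h' p) \<in> homA P"
  by (simp add: homA_def ahom_def reg_mod_def algebra_simps)
lemma homA_mulr: "h \<in> homA P \<Longrightarrow> (\<lambda>p. h p * a) \<in> homA P"
  by (simp add: homA_def ahom_def reg_mod_def algebra_simps)
lemma homA_zero: "(\<lambda>p. 0) \<in> homA P"
  by (simp add: homA_def ahom_def reg_mod_def)
lemma homA_sum: "finite J \<Longrightarrow> (\<And>j. j \<in> J \<Longrightarrow> H j \<in> homA P) \<Longrightarrow> (\<lambda>p. \<Sum>j\<in>J. H j p) \<in> homA P"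
  by (induction J rule: finite_induct) (auto simp: homA_zero homA_sum2)
lemma homA_comp: "is_amod P1 \<Longrightarrow> h \<in> homA P0 \<Longrightarrow> ahom P1 P0 f \<Longrightarrow> (\<lambda>p. if p \<in> mcar P1 then h (f p) else 0) \<in> homA P1"
  by (simp add: homA_def ahom_def reg_mod_def am_add am_act)
lemma homA_coord: "is_amod P \<Longrightarrow> ahom P (free_mod n) i \<Longrightarrow> (\<lambda>p. if p \<in> mcar P then i p j else 0) \<in> homA P"
  by (simp add: homA_def ahom_def reg_mod_def free_mod_def am_add am_act)

lemma nak_addh: "\<phi> \<in> mcar (nak emb P) \<Longrightarrow> h \<in> homA P \<Longrightarrow> h' \<in> homA P \<Longrightarrow> \<phi> (\<lambda>p. h p + h' p) = \<phi> h + \<phi> h'"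
  by (simp add: nak_def)
lemma nak_out: "\<phi> \<in> mcar (nak emb P) \<Longrightarrow> h \<notin> homA P \<Longrightarrow> \<phi> h = 0"
  by (simp add: nak_def)
lemma nak_scal: "\<phi> \<in> mcar (nak emb P) \<Longrightarrow> h \<in> homA P \<Longrightarrow> \<phi> (\<lambda>p. h p * emb c) = c * \<phi> h"
  by (simp add: nak_def)
lemma nak_zero: assumes "\<phi> \<in> mcar (nak emb P)" shows "\<phi> (\<lambda>p. 0) = 0"
proof -
  have "\<phi> (\<lambda>p. 0) = \<phi> (\<lambda>p. 0) + \<phi> (\<lambda>p. 0)" using nak_addh[OF assms homA_zero homA_zero] by simp
  thus ?thesis by (metis add_cancel_left_right)
qed
lemma nak_sum: assumes phi: "\<phi> \<in> mcar (nak emb P)"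
  shows "finite J \<Longrightarrow> (\<And>j. j \<in> J \<Longrightarrow> H j \<in> homA P) \<Longrightarrow> \<phi> (\<lambda>p. \<Sum>j\<in>J. H j p) = (\<Sum>j\<in>J. \<phi> (H j))"
proof (induction J rule: finite_induct)
  case empty thus ?case using nak_zero[OF phi] by simp
next
  case (insert j J)
  have "\<phi> (\<lambda>p. \<Sum>j\<in>insert j J. H j p) = \<phi> (\<lambda>p. H j p + (\<Sum>j\<in>J. H j p))"
    using insert by simp
  also have "\<dots> = \<phi> (H j) + \<phi> (\<lambda>p. \<Sum>j\<in>J. H j p)"
    using nak_addh[OF phi, of "H j" "\<lambda>p. \<Sum>j\<in>J. H j p"] insert homA_sum[of J H P] by simp
  finally show ?case using insert by simp
qed

lemma lc_hom0: assumes M: "is_amod M" and g: "ahom M N g" and z: "g (mzero M) = mzero N"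
  shows "snd ` set xs \<subseteq> mcar M \<Longrightarrow> g (lincomb M xs) = lincomb N (map (\<lambda>(a,x). (a, g x)) xs)"
proof (induction xs)
  case Nil thus ?case using z by simp
next
  case (Cons p xs) thus ?case
    by (cases p) (auto simp: ahom_add[OF g] ahom_act[OF g] lc_car[OF M] am_act[OF M])
qed

definition proj_data :: "('a::ring_1, 'p) amod \<Rightarrow> nat \<Rightarrow> ('p \<Rightarrow> nat \<Rightarrow> 'a) \<Rightarrow> ((nat \<Rightarrow> 'a) \<Rightarrow> 'p) \<Rightarrow> bool" where
  "proj_data P n i r \<longleftrightarrow> is_amod P \<and> ahom P (free_mod n) i \<and> ahom (free_mod n) P r \<and> (\<forall>x\<in>mcar P. r (i x) = x)"



lemma projA_data: "in_projA P \<Longrightarrow> \<exists>n i r. proj_data P n i r"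
  by (auto simp: in_projA_def proj_data_def)

lemma pd_expand: "proj_data P n i r \<Longrightarrow> x \<in> mcar P \<Longrightarrow> x = lincomb P (map (\<lambda>j. (i x j, r (ev j))) [0..<n])"
  using proj_expand[of P n i r x] by (simp add: proj_data_def)

lemma pd_rev: "proj_data P n i r \<Longrightarrow> j < n \<Longrightarrow> r (ev j) \<in> mcar P"
  using ahom_car[of "free_mod n" P r "ev j"] ev_car[of j n] by (simp add: proj_data_def)

lemma pd_iadd: "proj_data P n i r \<Longrightarrow> x \<in> mcar P \<Longrightarrow> y \<in> mcar P \<Longrightarrow> i (madd P x y) j = i x j + i y j"
  using ahom_add[of P "free_mod n" i x y] by (simp add: proj_data_def free_mod_def)
lemma pd_iact: "proj_data P n i r \<Longrightarrow> x \<in> mcar P \<Longrightarrow> i (mact P a x) j = a * i x j"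
  using ahom_act[of P "free_mod n" i x a] by (simp add: proj_data_def free_mod_def)

lemma lc_ahom_coeff: assumes pd: "proj_data P n i r" and Y: "is_amod Y" and yj: "\<And>j. j < n \<Longrightarrow> yj j \<in> mcar Y"
  shows "ahom P Y (\<lambda>x. lincomb Y (map (\<lambda>j. (i x j, yj j)) [0..<n]))"
  unfolding ahom_def
proof (intro conjI ballI allI)
  have ys: "yj ` set [0..<n] \<subseteq> mcar Y" using yj by auto
  fix x assume x: "x \<in> mcar P"
  show "lincomb Y (map (\<lambda>j. (i x j, yj j)) [0..<n]) \<in> mcar Y"
    by (rule lc_car[OF Y]) (use yj in auto)
  fix y assume y: "y \<in> mcar P"
  show "lincomb Y (map (\<lambda>j. (i (madd P x y) j, yj j)) [0..<n]) =
        madd Y (lincomb Y (map (\<lambda>j. (i x j, yj j)) [0..<n])) (lincomb Y (map (\<lambda>j. (i y j, yj j)) [0..<n]))"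
    using lc_addc[OF Y ys, of "\<lambda>j. i x j" "\<lambda>j. i y j"] pd_iadd[OF pd x y] by simp
next
  have ys: "yj ` set [0..<n] \<subseteq> mcar Y" using yj by auto
  fix a x assume x: "x \<in> mcar P"
  show "lincomb Y (map (\<lambda>j. (i (mact P a x) j, yj j)) [0..<n]) = mact Y a (lincomb Y (map (\<lambda>j. (i x j, yj j)) [0..<n]))"
    using lc_mulc[OF Y ys, of a "\<lambda>j. i x j"] pd_iact[OF pd x] by simp
qed

lemma proj_lift: assumes pd: "proj_data P n i r" and Y: "is_amod Y" and Z: "is_amod Z"
  and p: "ahom Y Z p" and w: "ahom P Z w" and sur: "\<forall>x\<in>mcar P. w x \<in> p ` mcar Y"
  shows "\<exists>v. ahom P Y v \<and> (\<forall>x\<in>mcar P. p (v x) = w x)"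
proof -
  have P: "is_amod P" using pd by (simp add: proj_data_def)
  define yj where "yj j = (SOME y. y \<in> mcar Y \<and> p y = w (r (ev j)))" for j
  have yj: "yj j \<in> mcar Y \<and> p (yj j) = w (r (ev j))" if "j < n" for j
  proof -
    have "\<exists>y. y \<in> mcar Y \<and> p y = w (r (ev j))" using sur pd_rev[OF pd that] by (metis imageE)
    thus ?thesis unfolding yj_def by (rule someI_ex)
  qed
  define v where "v x = lincomb Y (map (\<lambda>j. (i x j, yj j)) [0..<n])" for x
  have v: "ahom P Y v" unfolding v_def by (rule lc_ahom_coeff[OF pd Y]) (use yj in blast)
  have "p (v x) = w x" if x: "x \<in> mcar P" for x
  proof -
    have "p (v x) = lincomb Z (map (\<lambda>(a,y). (a, p y)) (map (\<lambda>j. (i x j, yj j)) [0..<n]))"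
      unfolding v_def by (rule lc_hom[OF Y Z p]) (use yj in auto)
    also have "\<dots> = lincomb Z (map (\<lambda>(a,y). (a, w y)) (map (\<lambda>j. (i x j, r (ev j))) [0..<n]))"
      by (simp add: o_def; rule arg_cong[where f="lincomb Z"]; rule map_cong; simp add: yj)
    also have "\<dots> = w (lincomb P (map (\<lambda>j. (i x j, r (ev j))) [0..<n]))"
      by (rule lc_hom[OF P Z w, symmetric]) (use pd_rev[OF pd] in auto)
    also have "\<dots> = w x" using pd_expand[OF pd x] by simp
    finally show ?thesis .
  qed
  thus ?thesis using v by blast
qed



lemma K_car: "\<phi> \<in> mcar (K_nak emb P1 P0 f) \<longleftrightarrow> \<phi> \<in> mcar (nak emb P1) \<and> nak_map P1 P0 f \<phi> = (\<lambda>h. 0)"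
  by (simp add: K_nak_def)
lemma K_zero: "mzero (K_nak emb P1 P0 f) = (\<lambda>h. 0)" by (simp add: K_nak_def nak_def)
lemma K_act: "mact (K_nak emb P1 P0 f) a \<phi> = (\<lambda>h. if h \<in> homA P1 then \<phi> (\<lambda>p. h p * a) else 0)"
  by (simp add: K_nak_def nak_def)
lemma K_add: "madd (K_nak emb P1 P0 f) \<phi> \<psi> = (\<lambda>h. \<phi> h + \<psi> h)"
  by (simp add: K_nak_def nak_def)
lemma K_lc: "lincomb (K_nak emb P1 P0 f) xs = lincomb (nak emb P1) xs"
  unfolding K_nak_def by (rule lc_upd)

lemma psi_zero: assumes X: "is_amod X" and psi: "ahom X (K_nak emb P1 P0 f) \<psi>"
  shows "\<psi> (mzero X) = (\<lambda>h. 0)"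
proof -
  have z: "mzero X \<in> mcar X" using am_zero[OF X] .
  have c: "\<psi> (mzero X) \<in> mcar (nak emb P1)" using ahom_car[OF psi z] K_car by blast
  have "\<psi> (mzero X) = \<psi> (mact X 0 (mzero X))" using am_act0[OF X z] by simp
  also have "\<dots> = mact (K_nak emb P1 P0 f) 0 (\<psi> (mzero X))" using ahom_act[OF psi z] .
  also have "\<dots> = (\<lambda>h. 0)" using nak_zero[OF c] by (auto simp: K_act fun_eq_iff)
  finally show ?thesis .
qed

lemma surj_imp_T: assumes pd1: "proj_data P1 n i r" and pd0: "proj_data P0 m i' r'"
  and f: "ahom P1 P0 f" and X: "is_amod X" and S: "surjP P1 P0 f X"
  and psi: "ahom X (K_nak emb P1 P0 f) \<psi>" and x: "x \<in> mcar X"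
  shows "\<psi> x = (\<lambda>h. 0)"
proof
  fix h
  have P1: "is_amod P1" and P0: "is_amod P0" and i: "ahom P1 (free_mod n) i" and i': "ahom P0 (free_mod m) i'"
    using pd1 pd0 by (auto simp: proj_data_def)
  have psiK: "\<And>y. y \<in> mcar X \<Longrightarrow> \<psi> y \<in> mcar (nak emb P1) \<and> nak_map P1 P0 f (\<psi> y) = (\<lambda>h. 0)"
    using ahom_car[OF psi] K_car by blast
  show "\<psi> x h = 0"
  proof (cases "h \<in> homA P1")
    case False thus ?thesis using nak_out psiK[OF x] by blast
  next
    case hA: True
    define hj where "hj j = (\<lambda>p. if p \<in> mcar P1 then i p j else 0)" for j
    have hjA: "hj j \<in> homA P1" for j unfolding hj_def by (rule homA_coord[OF P1 i])
    define c where "c j = h (r (ev j))" for j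
    have h0: "h (mzero P1) = mzero reg_mod"
      by (rule ahom_zero[OF P1 reg_is_amod homA_ahom[OF hA]])
    have hexp: "h = (\<lambda>p. \<Sum>j\<in>{0..<n}. hj j p * c j)"
    proof
      fix p show "h p = (\<Sum>j\<in>{0..<n}. hj j p * c j)"
      proof (cases "p \<in> mcar P1")
        case True
        have "h p = h (lincomb P1 (map (\<lambda>j. (i p j, r (ev j))) [0..<n]))"
          using pd_expand[OF pd1 True] by simp
        also have "\<dots> = lincomb reg_mod (map (\<lambda>(a,y). (a, h y)) (map (\<lambda>j. (i p j, r (ev j))) [0..<n]))"
          by (rule lc_hom0[OF P1 homA_ahom[OF hA] h0]) (use pd_rev[OF pd1] in auto)
        also have "\<dots> = (\<Sum>j\<in>{0..<n}. hj j p * c j)"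
          using True by (simp add: lc_reg o_def hj_def c_def interv_sum_list_conv_sum_set_nat)
        finally show ?thesis .
      next
        case False thus ?thesis using homA_out[OF hA False] by (simp add: hj_def)
      qed
    qed
    define u where "u p = mact X (h p) x" for p
    have u: "ahom P1 X u" unfolding ahom_def u_def
      using X x am_act[OF X x] homA_add[OF hA] homA_act[OF hA] by (simp add: am_dist2 am_mult)
    obtain v where v: "ahom P0 X v" and uv: "\<And>p. p \<in> mcar P1 \<Longrightarrow> u p = v (f p)"
      using S u by (auto simp: surjP_def)
    define z where "z l = v (r' (ev l))" for l
    have zX: "l < m \<Longrightarrow> z l \<in> mcar X" for l unfolding z_def using ahom_car[OF v pd_rev[OF pd0]] by blast
    define d where "d j l = i' (f (r (ev j))) l" for j l
    have step4: "\<psi> (v y) g = (\<Sum>l\<in>{0..<m}. \<psi> (z l) (\<lambda>p. g p * i' y l))" if y: "y \<in> mcar P0" and gA: "g \<in> homA P1" for y g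
    proof -
      have "v y = v (lincomb P0 (map (\<lambda>l. (i' y l, r' (ev l))) [0..<m]))" using pd_expand[OF pd0 y] by simp
      also have "\<dots> = lincomb X (map (\<lambda>(a,y). (a, v y)) (map (\<lambda>l. (i' y l, r' (ev l))) [0..<m]))"
        by (rule lc_hom[OF P0 X v]) (use pd_rev[OF pd0] in auto)
      finally have vy: "v y = lincomb X (map (\<lambda>l. (i' y l, z l)) [0..<m])" by (simp add: o_def z_def)
      have "\<psi> (v y) = lincomb (K_nak emb P1 P0 f) (map (\<lambda>(a,y). (a, \<psi> y)) (map (\<lambda>l. (i' y l, z l)) [0..<m]))"
        unfolding vy by (rule lc_hom0[OF X psi]) (auto simp: psi_zero[OF X psi] K_zero zX)
      thus ?thesis using gA by (simp add: K_lc lc_nak o_def interv_sum_list_conv_sum_set_nat)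
    qed
    have "\<psi> x h = (\<Sum>j\<in>{0..<n}. \<psi> x (\<lambda>p. hj j p * c j))"
      using nak_sum[OF conjunct1[OF psiK[OF x]], of "{0..<n}" "\<lambda>j p. hj j p * c j"] hexp homA_mulr[OF hjA]
      by simp
    also have "\<dots> = (\<Sum>j\<in>{0..<n}. \<psi> (mact X (c j) x) (hj j))"
      using ahom_act[OF psi x] hjA by (simp add: K_act)
    also have "\<dots> = (\<Sum>j\<in>{0..<n}. \<psi> (v (f (r (ev j)))) (hj j))"
    proof (rule sum.cong[OF refl])
      fix j assume "j \<in> {0..<n}"
      hence "r (ev j) \<in> mcar P1" using pd_rev[OF pd1] by auto
      thus "\<psi> (mact X (c j) x) (hj j) = \<psi> (v (f (r (ev j)))) (hj j)"
        using uv by (simp add: u_def c_def)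
    qed
    also have "\<dots> = (\<Sum>j\<in>{0..<n}. \<Sum>l\<in>{0..<m}. \<psi> (z l) (\<lambda>p. hj j p * d j l))"
    proof (rule sum.cong[OF refl])
      fix j assume "j \<in> {0..<n}"
      hence "f (r (ev j)) \<in> mcar P0" using pd_rev[OF pd1] ahom_car[OF f] by auto
      thus "\<psi> (v (f (r (ev j)))) (hj j) = (\<Sum>l\<in>{0..<m}. \<psi> (z l) (\<lambda>p. hj j p * d j l))"
        using step4 hjA by (simp add: d_def)
    qed
    also have "\<dots> = (\<Sum>l\<in>{0..<m}. \<Sum>j\<in>{0..<n}. \<psi> (z l) (\<lambda>p. hj j p * d j l))"
      by (rule sum.swap)
    also have "\<dots> = (\<Sum>l\<in>{0..<m}. \<psi> (z l) (\<lambda>p. \<Sum>j\<in>{0..<n}. hj j p * d j l))"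
    proof (rule sum.cong[OF refl])
      fix l assume "l \<in> {0..<m}"
      hence "\<psi> (z l) \<in> mcar (nak emb P1)" using psiK zX by auto
      thus "(\<Sum>j\<in>{0..<n}. \<psi> (z l) (\<lambda>p. hj j p * d j l)) = \<psi> (z l) (\<lambda>p. \<Sum>j\<in>{0..<n}. hj j p * d j l)"
        using nak_sum[of "\<psi> (z l)" emb P1 "{0..<n}" "\<lambda>j p. hj j p * d j l"] homA_mulr[OF hjA] by simp
    qed
    also have "\<dots> = 0"
    proof (rule sum.neutral, rule ballI)
      fix l assume l: "l \<in> {0..<m}"
      define h' where "h' = (\<lambda>q. if q \<in> mcar P0 then i' q l else 0)"
      have h'A: "h' \<in> homA P0" unfolding h'_def by (rule homA_coord[OF P0 i'])
      have eq: "(\<lambda>p. \<Sum>j\<in>{0..<n}. hj j p * d j l) = (\<lambda>p. if p \<in> mcar P1 then h' (f p) else 0)"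
      proof
        fix p show "(\<Sum>j\<in>{0..<n}. hj j p * d j l) = (if p \<in> mcar P1 then h' (f p) else 0)"
        proof (cases "p \<in> mcar P1")
          case True
          have fi: "ahom P1 (free_mod m) (\<lambda>p. i' (f p))" by (rule ahom_comp[OF f i'])
          have "i' (f p) = i' (f (lincomb P1 (map (\<lambda>j. (i p j, r (ev j))) [0..<n])))"
            using pd_expand[OF pd1 True] by simp
          also have "\<dots> = lincomb (free_mod m) (map (\<lambda>(a,y). (a, i' (f y))) (map (\<lambda>j. (i p j, r (ev j))) [0..<n]))"
            by (rule lc_hom[OF P1 free_is_amod fi]) (use pd_rev[OF pd1] in auto)
          finally have "i' (f p) l = (\<Sum>j\<in>{0..<n}. i p j * d j l)"
            by (simp add: lc_free o_def d_def interv_sum_list_conv_sum_set_nat)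
          thus ?thesis using True ahom_car[OF f True] by (simp add: hj_def h'_def)
        next
          case False thus ?thesis by (simp add: hj_def)
        qed
      qed
      have "\<psi> (z l) (\<lambda>p. if p \<in> mcar P1 then h' (f p) else 0) = nak_map P1 P0 f (\<psi> (z l)) h'"
        using h'A by (simp add: nak_map_def)
      also have "\<dots> = 0" using psiK zX l by auto
      finally show "\<psi> (z l) (\<lambda>p. \<Sum>j\<in>{0..<n}. hj j p * d j l) = 0" using eq by simp
    qed
    finally show ?thesis .
  qed
qed



lemma lc_foldr: "lincomb X (map (\<lambda>j. (c j, y j)) js) = foldr (\<lambda>j a. madd X (mact X (c j) (y j)) a) js (mzero X)"
  by (induction js) auto

lemma G_eval: "foldr (\<lambda>j acc. (\<lambda>p. madd X (F j p) (acc p))) js (\<lambda>p. mzero X) p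
   = foldr (\<lambda>j a. madd X (F j p) a) js (mzero X)"
  by (induction js) auto

lemma lam_foldr: assumes adV: "\<And>x y. x \<in> V \<Longrightarrow> y \<in> V \<Longrightarrow> ad x y \<in> V" and zV: "zz \<in> V"
  and la: "\<forall>x\<in>V. \<forall>y\<in>V. lam (ad x y) = lam x + lam y" and lz: "lam zz = (0::'k::field)"
  shows "(\<And>j. j \<in> set js \<Longrightarrow> F j \<in> V) \<Longrightarrow> foldr (\<lambda>j acc. ad (F j) acc) js zz \<in> V \<and>
     lam (foldr (\<lambda>j acc. ad (F j) acc) js zz) = (\<Sum>j\<leftarrow>js. lam (F j))"
  by (induction js) (auto simp: lz la adV zV)

lemma T_imp_surj:
  fixes emb :: "'k::field \<Rightarrow> 'a::ring_1" and P1 :: "('a, 'p1) amod" and P0 :: "('a, 'p0) amod"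
    and X :: "('a, 'x) amod" and f :: "'p1 \<Rightarrow> 'p0"
  assumes pd1: "proj_data P1 n i r" and P0: "is_amod P0"
  and f: "ahom P1 P0 f" and X: "is_amod X"
  and ea: "\<And>x y. emb (x + y) = emb x + emb y" and em: "\<And>x y. emb (x * y) = emb x * emb y"
  and e1: "emb 1 = 1" and ec: "\<And>c a. emb c * a = a * emb c"
  and T: "\<forall>g. ahom X (K_nak emb P1 P0 f) g \<longrightarrow> (\<forall>x\<in>mcar X. g x = mzero (K_nak emb P1 P0 f))"
  shows "surjP P1 P0 f X"
  unfolding surjP_def
proof (intro allI impI, rule ccontr)
  fix u assume u: "ahom P1 X u" and nv: "\<not> (\<exists>v. ahom P0 X v \<and> (\<forall>p\<in>mcar P1. u p = v (f p)))"
  have P1: "is_amod P1" and i: "ahom P1 (free_mod n) i" using pd1 by (auto simp: proj_data_def)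
  have e0: "emb 0 = 0" using ea[of 0 0] by simp
  define V where "V = {w. (\<forall>p\<in>mcar P1. w p \<in> mcar X) \<and> (\<forall>p. p \<notin> mcar P1 \<longrightarrow> w p = mzero X)}"
  define ad where "ad w w' = (\<lambda>p. madd X (w p) (w' p))" for w w' :: "'p1 \<Rightarrow> 'x"
  define zz where "zz = (\<lambda>p::'p1. mzero X)"
  define sc where "sc c w = (\<lambda>p. mact X (emb c) (w p))" for c :: 'k and w :: "'p1 \<Rightarrow> 'x"
  have wX: "w p \<in> mcar X" if "w \<in> V" for w p
    using that am_zero[OF X] unfolding V_def by (cases "p \<in> mcar P1") auto
  have K: "kvs V ad zz sc" unfolding kvs_def
  proof (intro conjI ballI allI)
    show "zz \<in> V" unfolding zz_def V_def using am_zero[OF X] by auto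
    fix x y assume x: "x \<in> V" and y: "y \<in> V"
    show "ad x y \<in> V" using x y am_add[OF X] am_lzero[OF X am_zero[OF X]] unfolding V_def ad_def by auto
    show "ad x y = ad y x" unfolding ad_def using am_comm[OF X] wX x y by auto
    fix c
    show "sc c (ad x y) = ad (sc c x) (sc c y)" unfolding ad_def sc_def using am_dist1[OF X] wX x y by auto
    fix w assume w: "w \<in> V"
    show "ad (ad x y) w = ad x (ad y w)" unfolding ad_def using am_assoc[OF X] wX x y w by auto
  next
    fix c x assume x: "x \<in> V"
    show "sc c x \<in> V" using x am_act[OF X] am_act_zero[OF X] unfolding V_def sc_def by auto
  next
    fix x assume x: "x \<in> V"
    show "ad zz x = x" unfolding ad_def zz_def using am_lzero[OF X] wX x by auto
    show "sc 1 x = x" unfolding sc_def using am_one[OF X] wX x e1 by auto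
    show "sc 0 x = zz" unfolding sc_def zz_def using am_act0[OF X] wX x e0 by auto
  next
    fix c d x assume x: "x \<in> V"
    show "sc (c + d) x = ad (sc c x) (sc d x)" unfolding sc_def ad_def using am_dist2[OF X] wX x ea by auto
    show "sc (c * d) x = sc c (sc d x)" unfolding sc_def using am_mult[OF X] wX x em by auto
  qed
  define ext where "ext v = (\<lambda>p. if p \<in> mcar P1 then v (f p) else mzero X)" for v :: "'p0 \<Rightarrow> 'x"
  define W where "W = {w. \<exists>v. ahom P0 X v \<and> w = ext v}"
  have WV: "W \<subseteq> V" unfolding W_def V_def ext_def using ahom_car[OF f] ahom_car by fastforce
  have sW: "subsp W ad zz sc" unfolding subsp_def
  proof (intro conjI ballI allI)
    have "ahom P0 X (\<lambda>q. mzero X)" unfolding ahom_def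
      using am_zero[OF X] am_lzero[OF X] am_act_zero[OF X] by auto
    moreover have "zz = ext (\<lambda>q. mzero X)" unfolding zz_def ext_def by auto
    ultimately show "zz \<in> W" unfolding W_def by blast
  next
    fix x y assume "x \<in> W" "y \<in> W"
    then obtain v v' where v: "ahom P0 X v" "x = ext v" and v': "ahom P0 X v'" "y = ext v'" unfolding W_def by blast
    have "ahom P0 X (\<lambda>q. madd X (v q) (v' q))" unfolding ahom_def
      using v(1) v'(1) am_add[OF X] by (auto simp: ahom_car ahom_add[OF v(1)] ahom_add[OF v'(1)]
        ahom_act[OF v(1)] ahom_act[OF v'(1)] am_dist1[OF X] am_swap4[OF X])
    moreover have "ad x y = ext (\<lambda>q. madd X (v q) (v' q))" unfolding ad_def ext_def v v'
      using am_lzero[OF X am_zero[OF X]] by auto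
    ultimately show "ad x y \<in> W" unfolding W_def by blast
  next
    fix c x assume "x \<in> W"
    then obtain v where v: "ahom P0 X v" "x = ext v" unfolding W_def by blast
    have "ahom P0 X (\<lambda>q. mact X (emb c) (v q))" unfolding ahom_def
    proof (intro conjI ballI allI)
      fix q assume q: "q \<in> mcar P0"
      show "mact X (emb c) (v q) \<in> mcar X" using am_act[OF X ahom_car[OF v(1) q]] .
      fix a show "mact X (emb c) (v (mact P0 a q)) = mact X a (mact X (emb c) (v q))"
        using ahom_act[OF v(1) q] am_mult[OF X ahom_car[OF v(1) q], symmetric] ec by metis
    next
      fix q q' assume q: "q \<in> mcar P0" and q': "q' \<in> mcar P0"
      show "mact X (emb c) (v (madd P0 q q')) = madd X (mact X (emb c) (v q)) (mact X (emb c) (v q'))"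
        using ahom_add[OF v(1) q q'] am_dist1[OF X ahom_car[OF v(1) q] ahom_car[OF v(1) q']] by simp
    qed
    moreover have "sc c x = ext (\<lambda>q. mact X (emb c) (v q))" unfolding sc_def ext_def v
      using am_act_zero[OF X] by auto
    ultimately show "sc c x \<in> W" unfolding W_def by blast
  qed
  define u' where "u' = (\<lambda>p. if p \<in> mcar P1 then u p else mzero X)"
  have u'V: "u' \<in> V" unfolding u'_def V_def using ahom_car[OF u] by auto
  have u'W: "u' \<notin> W"
  proof
    assume "u' \<in> W"
    then obtain v where v: "ahom P0 X v" "u' = ext v" unfolding W_def by blast
    have "\<forall>p\<in>mcar P1. u p = v (f p)"
    proof
      fix p assume p: "p \<in> mcar P1"
      have "u' p = ext v p" using v by simp
      thus "u p = v (f p)" using p by (simp add: u'_def ext_def)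
    qed
    thus False using nv v by blast
  qed
  obtain lam where la: "\<forall>x\<in>V. \<forall>y\<in>V. lam (ad x y) = lam x + lam y"
    and ls: "\<forall>c. \<forall>x\<in>V. lam (sc c x) = c * lam x" and lW: "\<forall>w\<in>W. lam w = 0" and lu: "lam u' = 1"
    using sep_functional[OF K sW WV u'V u'W] by blast
  define tau where "tau h y = (\<lambda>p. if p \<in> mcar P1 then mact X (h p) y else mzero X)" for h :: "'p1 \<Rightarrow> 'a" and y
  have tauV: "y \<in> mcar X \<Longrightarrow> tau h y \<in> V" for h y unfolding tau_def V_def using am_act[OF X] by auto
  define psi where "psi y = (\<lambda>h. if h \<in> homA P1 then lam (tau h y) else 0)" for y
  have psi: "ahom X (K_nak emb P1 P0 f) psi" unfolding ahom_def
  proof (intro conjI ballI allI)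
    fix y assume y: "y \<in> mcar X"
    have inN: "psi y \<in> mcar (nak emb P1)" unfolding nak_def
    proof (simp, intro conjI ballI allI impI)
      fix h h' assume h: "h \<in> homA P1" and h': "h' \<in> homA P1"
      have "tau (\<lambda>p. h p + h' p) y = ad (tau h y) (tau h' y)" unfolding tau_def ad_def
        using am_dist2[OF X y] am_lzero[OF X am_zero[OF X]] by auto
      thus "psi y (\<lambda>p. h p + h' p) = psi y h + psi y h'"
        unfolding psi_def using homA_sum2[OF h h'] h h' la tauV[OF y] by simp
    next
      fix c h assume h: "h \<in> homA P1"
      have "tau (\<lambda>p. h p * emb c) y = sc c (tau h y)" unfolding tau_def sc_def
        by (rule ext) (auto simp: am_mult[OF X y, symmetric] am_act_zero[OF X] ec[of c])
      thus "psi y (\<lambda>p. h p * emb c) = c * psi y h"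
        unfolding psi_def using homA_mulr[OF h] h ls tauV[OF y] by simp
    next
      fix h assume "h \<notin> homA P1" thus "psi y h = 0" unfolding psi_def by simp
    qed
    have "nak_map P1 P0 f (psi y) = (\<lambda>h. 0)"
    proof
      fix h0 show "nak_map P1 P0 f (psi y) h0 = 0"
      proof (cases "h0 \<in> homA P0")
        case False thus ?thesis by (simp add: nak_map_def)
      next
        case True
        let ?g = "\<lambda>p. if p \<in> mcar P1 then h0 (f p) else 0"
        have gA: "?g \<in> homA P1" by (rule homA_comp[OF P1 True f])
        have vh: "ahom P0 X (\<lambda>q. mact X (h0 q) y)" unfolding ahom_def
          using am_act[OF X y] homA_add[OF True] homA_act[OF True] am_dist2[OF X y] am_mult[OF X y] by simp
        have "tau ?g y = ext (\<lambda>q. mact X (h0 q) y)" unfolding tau_def ext_def by auto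
        hence "tau ?g y \<in> W" unfolding W_def using vh by blast
        thus ?thesis using lW gA True by (simp add: nak_map_def psi_def)
      qed
    qed
    thus "psi y \<in> mcar (K_nak emb P1 P0 f)" using inN K_car by blast
  next
    fix y y' assume y: "y \<in> mcar X" and y': "y' \<in> mcar X"
    have "tau h (madd X y y') = ad (tau h y) (tau h y')" for h unfolding tau_def ad_def
      using am_dist1[OF X y y'] am_lzero[OF X am_zero[OF X]] by auto
    thus "psi (madd X y y') = madd (K_nak emb P1 P0 f) (psi y) (psi y')"
      unfolding psi_def K_add using la tauV[OF y] tauV[OF y'] by auto
  next
    fix a y assume y: "y \<in> mcar X"
    have tm: "tau h (mact X a y) = tau (\<lambda>p. h p * a) y" for h unfolding tau_def
      using am_mult[OF X y] by auto
    show "psi (mact X a y) = mact (K_nak emb P1 P0 f) a (psi y)"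
      unfolding psi_def K_act
    proof (rule ext)
      fix h show "(if h \<in> homA P1 then lam (tau h (mact X a y)) else 0) =
        (if h \<in> homA P1 then if (\<lambda>p. h p * a) \<in> homA P1 then lam (tau (\<lambda>p. h p * a) y) else 0 else 0)"
        using tm[of h] homA_mulr[of h P1 a] by auto
    qed
  qed
  have psi0: "\<And>y. y \<in> mcar X \<Longrightarrow> psi y = (\<lambda>h. 0)" using T psi K_zero by metis
  define hj where "hj j = (\<lambda>p. if p \<in> mcar P1 then i p j else 0)" for j
  have hjA: "hj j \<in> homA P1" for j unfolding hj_def by (rule homA_coord[OF P1 i])
  define xj where "xj j = u (r (ev j))" for j
  have xjX: "j < n \<Longrightarrow> xj j \<in> mcar X" for j unfolding xj_def using ahom_car[OF u pd_rev[OF pd1]] by blast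
  define G where "G = foldr (\<lambda>j acc. ad (tau (hj j) (xj j)) acc) [0..<n] zz"
  have lz: "lam zz = 0"
  proof -
    have "ad zz zz = zz" unfolding ad_def zz_def using am_lzero[OF X am_zero[OF X]] by simp
    hence "lam zz = lam zz + lam zz" using la K unfolding kvs_def by metis
    thus ?thesis by (metis add_cancel_left_right)
  qed
  have GV: "G \<in> V \<and> lam G = (\<Sum>j\<leftarrow>[0..<n]. lam (tau (hj j) (xj j)))"
    unfolding G_def
    by (rule lam_foldr[where V=V]) (use K la lz tauV xjX in \<open>auto simp: kvs_def\<close>)
  have "G = u'"
  proof
    fix p
    have "G p = foldr (\<lambda>j a. madd X (tau (hj j) (xj j) p) a) [0..<n] (mzero X)"
      unfolding G_def ad_def zz_def by (rule G_eval)
    show "G p = u' p"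
    proof (cases "p \<in> mcar P1")
      case True
      have "u p = u (lincomb P1 (map (\<lambda>j. (i p j, r (ev j))) [0..<n]))" using pd_expand[OF pd1 True] by simp
      also have "\<dots> = lincomb X (map (\<lambda>(a,y). (a, u y)) (map (\<lambda>j. (i p j, r (ev j))) [0..<n]))"
        by (rule lc_hom[OF P1 X u]) (use pd_rev[OF pd1] in auto)
      also have "\<dots> = foldr (\<lambda>j a. madd X (mact X (i p j) (xj j)) a) [0..<n] (mzero X)"
        by (simp add: o_def xj_def lc_foldr[of X "\<lambda>j. i p j" "\<lambda>j. u (r (ev j))", simplified])
      finally show ?thesis using \<open>G p = _\<close> True by (simp add: u'_def tau_def hj_def)
    next
      case False
      have "foldr (\<lambda>j a. madd X (tau (hj j) (xj j) p) a) js (mzero X) = mzero X" for js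
        using False am_lzero[OF X am_zero[OF X]] by (induction js) (auto simp: tau_def)
      thus ?thesis using \<open>G p = _\<close> False by (simp add: u'_def)
    qed
  qed
  have "lam (tau (hj j) (xj j)) = 0" if "j < n" for j
    using psi0[OF xjX[OF that]] hjA unfolding psi_def by metis
  hence "lam G = 0" using GV by (simp add: interv_sum_list_conv_sum_set_nat)
  thus False using lu \<open>G = u'\<close> by simp
qed



fun kspan :: "('k::field \<Rightarrow> 'a::ring_1) \<Rightarrow> ('a, 'm) amod \<Rightarrow> 'm list \<Rightarrow> 'm set" where
  "kspan emb M [] = {mzero M}"
| "kspan emb M (v # vs) = {madd M (mact M (emb c) v) w | c w. w \<in> kspan emb M vs}"

definition ksub :: "('k::field \<Rightarrow> 'a::ring_1) \<Rightarrow> ('a, 'm) amod \<Rightarrow> 'm set \<Rightarrow> bool" where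
  "ksub emb M L \<longleftrightarrow> L \<subseteq> mcar M \<and> mzero M \<in> L \<and> (\<forall>x\<in>L. \<forall>y\<in>L. madd M x y \<in> L) \<and>
     (\<forall>c. \<forall>x\<in>L. mact M (emb c) x \<in> L)"

locale embp =
  fixes emb :: "'k::field \<Rightarrow> 'a::ring_1"
  assumes ea: "\<And>x y. emb (x + y) = emb x + emb y" and em: "\<And>x y. emb (x * y) = emb x * emb y"
    and e1: "emb 1 = 1"
begin

lemma e0: "emb 0 = 0" using ea[of 0 0] by simp

lemma ks_car: "is_amod M \<Longrightarrow> set vs \<subseteq> mcar M \<Longrightarrow> kspan emb M vs \<subseteq> mcar M"
  by (induction vs) (auto simp: am_zero am_add am_act)

lemma ks_zero: assumes M: "is_amod M" shows "set vs \<subseteq> mcar M \<Longrightarrow> mzero M \<in> kspan emb M vs"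
proof (induction vs)
  case (Cons v vs)
  have "mzero M = madd M (mact M (emb 0) v) (mzero M)"
    using Cons.prems M by (simp add: e0 am_act0 am_lzero am_zero)
  thus ?case using Cons by auto
qed simp

lemma ks_add: assumes M: "is_amod M"
  shows "set vs \<subseteq> mcar M \<Longrightarrow> x \<in> kspan emb M vs \<Longrightarrow> y \<in> kspan emb M vs \<Longrightarrow> madd M x y \<in> kspan emb M vs"
proof (induction vs arbitrary: x y)
  case Nil thus ?case using M by (simp add: am_lzero am_zero)
next
  case (Cons v vs)
  then obtain c w d w' where x: "x = madd M (mact M (emb c) v) w" "w \<in> kspan emb M vs"
    and y: "y = madd M (mact M (emb d) v) w'" "w' \<in> kspan emb M vs" by auto
  have v: "v \<in> mcar M" and vs: "set vs \<subseteq> mcar M" using Cons.prems by auto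
  have wM: "w \<in> mcar M" "w' \<in> mcar M" using ks_car[OF M vs] x y by auto
  have "madd M x y = madd M (mact M (emb (c + d)) v) (madd M w w')"
    unfolding x y using am_swap4[OF M am_act[OF M v] wM(1) am_act[OF M v] wM(2)] by (simp add: ea am_dist2[OF M v])
  moreover have "madd M w w' \<in> kspan emb M vs" using Cons.IH[OF vs x(2) y(2)] .
  ultimately show ?case by auto
qed

lemma ks_scal: assumes M: "is_amod M"
  shows "set vs \<subseteq> mcar M \<Longrightarrow> x \<in> kspan emb M vs \<Longrightarrow> mact M (emb c) x \<in> kspan emb M vs"
proof (induction vs arbitrary: x)
  case Nil thus ?case using M by (simp add: am_act_zero)
next
  case (Cons v vs)
  then obtain d w where x: "x = madd M (mact M (emb d) v) w" "w \<in> kspan emb M vs" by auto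
  have v: "v \<in> mcar M" and vs: "set vs \<subseteq> mcar M" using Cons.prems by auto
  have wM: "w \<in> mcar M" using ks_car[OF M vs] x by auto
  have "mact M (emb c) x = madd M (mact M (emb (c * d)) v) (mact M (emb c) w)"
    unfolding x using M v wM by (simp add: em am_dist1 am_mult am_act)
  moreover have "mact M (emb c) w \<in> kspan emb M vs" using Cons.IH[OF vs x(2)] .
  ultimately show ?case by auto
qed

lemma ks_gen: assumes M: "is_amod M"
  shows "set vs \<subseteq> mcar M \<Longrightarrow> u \<in> set vs \<Longrightarrow> u \<in> kspan emb M vs"
proof (induction vs)
  case Nil thus ?case by simp
next
  case (Cons v vs)
  have v: "v \<in> mcar M" and vs: "set vs \<subseteq> mcar M" using Cons.prems by auto
  show ?case
  proof (cases "u = v")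
    case True
    have "u = madd M (mact M (emb 1) v) (mzero M)" using True M v by (simp add: e1 am_one am_rzero)
    thus ?thesis using ks_zero[OF M vs] by auto
  next
    case False
    hence uw: "u \<in> kspan emb M vs" using Cons by auto
    have "u = madd M (mact M (emb 0) v) u" using M v ks_car[OF M vs] uw by (auto simp: e0 am_act0 am_lzero)
    thus ?thesis using uw by auto
  qed
qed

lemma ks_ksub: "is_amod M \<Longrightarrow> set vs \<subseteq> mcar M \<Longrightarrow> ksub emb M (kspan emb M vs)"
  unfolding ksub_def by (simp add: ks_car ks_zero ks_add ks_scal)

lemma ks_lincomb: "x \<in> kspan emb M ls \<Longrightarrow> \<exists>cs. map snd cs = ls \<and> x = lincomb M cs"
proof (induction ls arbitrary: x)
  case Nil thus ?case by simp
next
  case (Cons v vs)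
  then obtain c w where "x = madd M (mact M (emb c) v) w" "w \<in> kspan emb M vs" by auto
  moreover obtain cs where "map snd cs = vs" "w = lincomb M cs" using Cons.IH calculation(2) by blast
  ultimately show ?case by (intro exI[of _ "(emb c, v) # cs"]) simp
qed

lemma fin_span: assumes M: "is_amod M"
  shows "set vs \<subseteq> mcar M \<Longrightarrow> ksub emb M L \<Longrightarrow> L \<subseteq> kspan emb M vs \<Longrightarrow> \<exists>ls. set ls \<subseteq> L \<and> L \<subseteq> kspan emb M ls"
proof (induction vs arbitrary: L)
  case Nil thus ?case by (intro exI[of _ "[]"]) auto
next
  case (Cons v vs)
  have v: "v \<in> mcar M" and vs: "set vs \<subseteq> mcar M" using Cons.prems by auto
  have LM: "L \<subseteq> mcar M" using Cons.prems by (simp add: ksub_def)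
  define L' where "L' = L \<inter> kspan emb M vs"
  have "ksub emb M L'" using Cons.prems(2) ks_ksub[OF M vs] unfolding ksub_def L'_def by blast
  then obtain ls' where ls': "set ls' \<subseteq> L'" "L' \<subseteq> kspan emb M ls'"
    using Cons.IH[OF vs] L'_def by blast
  show ?case
  proof (cases "L \<subseteq> kspan emb M vs")
    case True
    hence "L' = L" unfolding L'_def by blast
    thus ?thesis using ls' by blast
  next
    case False
    then obtain l0 where l0: "l0 \<in> L" "l0 \<notin> kspan emb M vs" by blast
    then obtain c0 w0 where l0e: "l0 = madd M (mact M (emb c0) v) w0" "w0 \<in> kspan emb M vs"
      using Cons.prems(3) by auto
    have w0M: "w0 \<in> mcar M" using ks_car[OF M vs] l0e by auto
    have c0: "c0 \<noteq> 0"
    proof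
      assume "c0 = 0"
      hence "l0 = w0" using l0e M v w0M by (simp add: e0 am_act0 am_lzero)
      thus False using l0 l0e by simp
    qed
    have "L \<subseteq> kspan emb M (l0 # ls')"
    proof
      fix l assume l: "l \<in> L"
      then obtain d w where le: "l = madd M (mact M (emb d) v) w" "w \<in> kspan emb M vs"
        using Cons.prems(3) by auto
      have wM: "w \<in> mcar M" using ks_car[OF M vs] le by auto
      define e where "e = d / c0"
      define t where "t = madd M l (mact M (emb (- e)) l0)"
      have tL: "t \<in> L" unfolding t_def using Cons.prems(2) l l0 by (simp add: ksub_def)
      have "mact M (emb (- e)) l0 = madd M (mact M (emb (- d)) v) (mact M (emb (- e)) w0)"
        unfolding l0e using M v w0M c0 by (simp add: am_dist1 am_mult[symmetric] em[symmetric] am_act e_def)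
      hence "t = madd M (madd M (mact M (emb d) v) (mact M (emb (- d)) v)) (madd M w (mact M (emb (- e)) w0))"
        unfolding t_def le(1) using am_swap4[OF M am_act[OF M v] wM am_act[OF M v] am_act[OF M w0M]] by simp
      also have "\<dots> = madd M w (mact M (emb (- e)) w0)"
        using M v wM w0M by (simp add: am_dist2[symmetric] ea[symmetric] e0 am_act0 am_lzero am_add am_act)
      finally have "t \<in> kspan emb M vs"
        using ks_add[OF M vs le(2) ks_scal[OF M vs l0e(2)]] by simp
      hence tl: "t \<in> kspan emb M ls'" using tL ls' L'_def by blast
      have l0M: "l0 \<in> mcar M" and lM: "l \<in> mcar M" using LM l0 l by auto
      have "madd M (mact M (emb e) l0) t = madd M l (madd M (mact M (emb e) l0) (mact M (emb (- e)) l0))"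
        unfolding t_def using M l0M lM by (simp add: am_act am_lcomm)
      also have "\<dots> = l" using M l0M lM
        by (simp add: am_dist2[symmetric] ea[symmetric] e0 am_act0 am_rzero)
      finally show "l \<in> kspan emb M (l0 # ls')" using tl by force
    qed
    moreover have "set (l0 # ls') \<subseteq> L" using l0 ls' L'_def by auto
    ultimately show ?thesis by blast
  qed
qed

end



lemma submod: assumes M: "is_amod M" and S: "S \<subseteq> mcar M" "mzero M \<in> S"
  "\<forall>x\<in>S. \<forall>y\<in>S. madd M x y \<in> S" "\<forall>a. \<forall>x\<in>S. mact M a x \<in> S"
  shows "is_amod (M\<lparr>mcar := S\<rparr>)"
  unfolding is_amod_def
proof (simp, intro conjI ballI allI)
  show "mzero M \<in> S" using S by simp
  fix x assume x: "x \<in> S"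
  hence xM: "x \<in> mcar M" using S by blast
  show "madd M (mzero M) x = x" using am_lzero[OF M xM] .
  show "mact M 1 x = x" using am_one[OF M xM] .
  show "\<exists>y\<in>S. madd M x y = mzero M" using am_neg[OF M xM] S x by blast
  fix a show "mact M a x \<in> S" using S x by blast
  fix b show "mact M (a + b) x = madd M (mact M a x) (mact M b x)" using am_dist2[OF M xM] .
  show "mact M (a * b) x = mact M a (mact M b x)" using am_mult[OF M xM] .
next
  fix x y assume x: "x \<in> S" and y: "y \<in> S"
  hence xM: "x \<in> mcar M" and yM: "y \<in> mcar M" using S by auto
  show "madd M x y \<in> S" using S x y by blast
  show "madd M x y = madd M y x" using am_comm[OF M xM yM] .
  fix a show "mact M a (madd M x y) = madd M (mact M a x) (mact M a y)" using am_dist1[OF M xM yM] .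
next
  fix x y z assume "x \<in> S" "y \<in> S" "z \<in> S"
  thus "madd M (madd M x y) z = madd M x (madd M y z)" using am_assoc[OF M] S by blast
qed

lemma ker_car: "mcar (ker_mod X Y g) = {x \<in> mcar X. g x = mzero Y}" by (simp add: ker_mod_def)

lemma ker_is_amod: assumes X: "is_amod X" and Y: "is_amod Y" and g: "ahom X Y g"
  shows "is_amod (ker_mod X Y g)"
  unfolding ker_mod_def
  by (rule submod[OF X])
     (auto simp: ahom_zero[OF X Y g] am_zero[OF X] am_add[OF X] am_act[OF X] ahom_add[OF g] ahom_act[OF g]
        am_lzero[OF Y] am_zero[OF Y] am_act_zero[OF Y])

lemma fd_embp: "fd_algebra emb \<Longrightarrow> embp emb"
  unfolding fd_algebra_def embp_def by meson

lemma ker_fg: fixes emb :: "'k::field \<Rightarrow> 'a::ring_1" and X :: "('a, 'x) amod"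
  assumes fd: "fd_algebra emb" and XM: "in_modA X" and Y: "is_amod Y" and g: "ahom X Y g"
  shows "in_modA (ker_mod X Y g)"
proof -
  interpret embp emb using fd_embp[OF fd] .
  have X: "is_amod X" using XM by (simp add: in_modA_def)
  obtain gs where gs: "set gs \<subseteq> mcar X" "\<forall>x\<in>mcar X. \<exists>cs. map snd cs = gs \<and> x = lincomb X cs"
    using XM unfolding in_modA_def by meson
  obtain B where B: "finite B" "\<forall>a. \<exists>c. a = (\<Sum>b\<in>B. emb (c b) * b)" using fd unfolding fd_algebra_def by meson
  obtain bl where bl: "set bl = B" using finite_list[OF B(1)] by blast
  define vs where "vs = concat (map (\<lambda>g. map (\<lambda>b. mact X b g) bl) gs)"
  have vsX: "set vs \<subseteq> mcar X" unfolding vs_def using gs(1) am_act[OF X] by auto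
  have c1: "mact X (\<Sum>b\<in>B'. emb (c b) * b) u \<in> kspan emb X vs" if "finite B'" "B' \<subseteq> B" "u \<in> set gs" for B' c u
    using that
  proof (induction B' rule: finite_induct)
    case empty thus ?case using am_act0[OF X] gs(1) ks_zero[OF X vsX] by auto
  next
    case (insert b B')
    have uX: "u \<in> mcar X" using insert gs(1) by auto
    have "mact X b u \<in> set vs" unfolding vs_def using insert bl by auto
    hence "mact X (emb (c b)) (mact X b u) \<in> kspan emb X vs"
      by (intro ks_scal[OF X vsX] ks_gen[OF X vsX])
    moreover have "mact X (\<Sum>b\<in>insert b B'. emb (c b) * b) u
      = madd X (mact X (emb (c b)) (mact X b u)) (mact X (\<Sum>b\<in>B'. emb (c b) * b) u)"
      using insert uX by (simp add: am_dist2[OF X] am_mult[OF X])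
    ultimately show ?case using ks_add[OF X vsX] insert by simp
  qed
  have c2: "lincomb X cs \<in> kspan emb X vs" if "set (map snd cs) \<subseteq> set gs" for cs
    using that
  proof (induction cs)
    case Nil thus ?case using ks_zero[OF X vsX] by simp
  next
    case (Cons p cs)
    obtain a u where p: "p = (a, u)" by (cases p)
    obtain c where "a = (\<Sum>b\<in>B. emb (c b) * b)" using B(2) by blast
    hence "mact X a u \<in> kspan emb X vs" using c1[OF B(1) subset_refl, of u c] Cons.prems p by auto
    thus ?case using Cons ks_add[OF X vsX] p by auto
  qed
  have Xsp: "mcar X \<subseteq> kspan emb X vs"
  proof
    fix x assume "x \<in> mcar X"
    then obtain cs where "map snd cs = gs" "x = lincomb X cs" using gs(2) by blast
    thus "x \<in> kspan emb X vs" using c2[of cs] by simp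
  qed
  define L where "L = {x \<in> mcar X. g x = mzero Y}"
  have kL: "ksub emb X L" unfolding ksub_def L_def
    by (auto simp: ahom_zero[OF X Y g] am_zero[OF X] am_add[OF X] am_act[OF X] ahom_add[OF g] ahom_act[OF g]
        am_lzero[OF Y] am_zero[OF Y] am_act_zero[OF Y])
  obtain ls where ls: "set ls \<subseteq> L" "L \<subseteq> kspan emb X ls"
    using fin_span[OF X vsX kL] Xsp L_def by blast
  show ?thesis unfolding in_modA_def
  proof (intro conjI ker_is_amod[OF X Y g] exI[of _ ls] ballI)
    show "set ls \<subseteq> mcar (ker_mod X Y g)" using ls by (simp add: ker_car L_def)
    fix x assume "x \<in> mcar (ker_mod X Y g)"
    hence "x \<in> L" by (simp add: ker_car L_def)
    hence "x \<in> kspan emb X ls" using ls(2) by (rule subsetD[rotated])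
    from ks_lincomb[OF this] obtain cs where "map snd cs = ls" "x = lincomb X cs" by blast
    thus "\<exists>cs. map snd cs = ls \<and> x = lincomb (ker_mod X Y g) cs"
      by (auto simp: ker_mod_def lc_upd)
  qed
qed

lemma quot_fg: assumes YM: "in_modA Y" and Z: "is_amod Z" and p: "ahom Y Z p" and sur: "p ` mcar Y = mcar Z"
  shows "in_modA Z"
proof -
  have Y: "is_amod Y" using YM by (simp add: in_modA_def)
  obtain gs where gs: "set gs \<subseteq> mcar Y" "\<forall>x\<in>mcar Y. \<exists>cs. map snd cs = gs \<and> x = lincomb Y cs"
    using YM unfolding in_modA_def by (elim conjE exE) (rule that, assumption+)
  have g1: "set (map p gs) \<subseteq> mcar Z" using gs(1) ahom_car[OF p] by auto
  have g2: "\<exists>cs. map snd cs = map p gs \<and> z = lincomb Z cs" if z: "z \<in> mcar Z" for z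
  proof -
    obtain y where y: "y \<in> mcar Y" "z = p y" using sur z by blast
    then obtain cs where cs: "map snd cs = gs" "y = lincomb Y cs" using gs(2) by blast
    have sc: "snd ` set cs \<subseteq> mcar Y" using cs(1) gs(1) by (metis set_map)
    have "z = lincomb Z (map (\<lambda>(a,x). (a, p x)) cs)"
      using y(2) cs(2) lc_hom[OF Y Z p sc] by simp
    moreover have "map snd (map (\<lambda>(a,x). (a, p x)) cs) = map p gs" 
      unfolding cs(1)[symmetric] by (induction cs) auto
    ultimately show ?thesis by blast
  qed
  show ?thesis unfolding in_modA_def using Z g1 g2 by (intro conjI exI[of _ "map p gs"] ballI) auto
qed

lemma W_iff: assumes pd1: "proj_data P1 n i r" and pd0: "proj_data P0 m i' r'"
  and f: "ahom P1 P0 f" and fd: "fd_algebra emb"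
  shows "Wf emb P1 P0 f X \<longleftrightarrow> in_modA X \<and> injP P1 P0 f X \<and> surjP P1 P0 f X"
proof -
  have P1: "is_amod P1" and P0: "is_amod P0" using pd1 pd0 by (auto simp: proj_data_def)
  have ea: "\<And>x y. emb (x + y) = emb x + emb y" and em: "\<And>x y. emb (x * y) = emb x * emb y"
    and e1: "emb 1 = 1" and ec: "\<And>c a. emb c * a = a * emb c" using fd unfolding fd_algebra_def by meson+
  show ?thesis
  proof
    assume W: "Wf emb P1 P0 f X"
    hence XM: "in_modA X" and X: "is_amod X" by (auto simp: Wf_def Tbar_def in_modA_def)
    have "injP P1 P0 f X" using F_imp_inj[OF P1 P0 f X] W by (simp add: Wf_def)
    moreover have "surjP P1 P0 f X" using T_imp_surj[OF pd1 P0 f X ea em e1 ec] W by (simp add: Wf_def Tbar_def)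
    ultimately show "in_modA X \<and> injP P1 P0 f X \<and> surjP P1 P0 f X" using XM by blast
  next
    assume H: "in_modA X \<and> injP P1 P0 f X \<and> surjP P1 P0 f X"
    hence X: "is_amod X" by (simp add: in_modA_def)
    have "Fbar P1 P0 f X" using inj_imp_F[OF P1 P0 f X] H by blast
    moreover have "Tbar emb P1 P0 f X" unfolding Tbar_def
    proof (intro conjI allI impI ballI)
      show "in_modA X" using H by blast
      fix g x assume "ahom X (K_nak emb P1 P0 f) g" "x \<in> mcar X"
      thus "g x = mzero (K_nak emb P1 P0 f)" using H surj_imp_T[OF pd1 pd0 f X] by (simp add: K_zero)
    qed
    ultimately show "Wf emb P1 P0 f X" by (simp add: Wf_def)
  qed
qed



lemma ahom_plus: assumes N: "is_amod N" and a: "ahom M N a" and b: "ahom M N b"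
  shows "ahom M N (\<lambda>x. madd N (a x) (b x))"
  unfolding ahom_def
proof (intro conjI ballI allI)
  fix x assume x: "x \<in> mcar M"
  show "madd N (a x) (b x) \<in> mcar N" using am_add[OF N ahom_car[OF a x] ahom_car[OF b x]] .
  fix c show "madd N (a (mact M c x)) (b (mact M c x)) = mact N c (madd N (a x) (b x))"
    using ahom_act[OF a x] ahom_act[OF b x] am_dist1[OF N ahom_car[OF a x] ahom_car[OF b x]] by simp
next
  fix x y assume x: "x \<in> mcar M" and y: "y \<in> mcar M"
  show "madd N (a (madd M x y)) (b (madd M x y)) = madd N (madd N (a x) (b x)) (madd N (a y) (b y))"
    using ahom_add[OF a x y] ahom_add[OF b x y]
      am_swap4[OF N ahom_car[OF a x] ahom_car[OF a y] ahom_car[OF b x] ahom_car[OF b y]] by simp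
qed

lemma ahom_neg: assumes N: "is_amod N" and b: "ahom M N b"
  shows "ahom M N (\<lambda>x. mact N (-1) (b x))"
  unfolding ahom_def
proof (intro conjI ballI allI)
  fix x assume x: "x \<in> mcar M"
  show "mact N (-1) (b x) \<in> mcar N" using am_act[OF N ahom_car[OF b x]] .
  fix c
  have "mact N (-1) (mact N c (b x)) = mact N ((-1) * c) (b x)" by (simp add: am_mult[OF N ahom_car[OF b x], of "-1" c, symmetric])
  also have "\<dots> = mact N (c * (-1)) (b x)" by simp
  also have "\<dots> = mact N c (mact N (-1) (b x))" using am_mult[OF N ahom_car[OF b x], of c "-1"] by simp
  finally show "mact N (-1) (b (mact M c x)) = mact N c (mact N (-1) (b x))"
    using ahom_act[OF b x] by simp
next
  fix x y assume x: "x \<in> mcar M" and y: "y \<in> mcar M"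
  show "mact N (-1) (b (madd M x y)) = madd N (mact N (-1) (b x)) (mact N (-1) (b y))"
    using ahom_add[OF b x y] am_dist1[OF N ahom_car[OF b x] ahom_car[OF b y]] by simp
qed

lemma ahom_diff: "is_amod N \<Longrightarrow> ahom M N a \<Longrightarrow> ahom M N b \<Longrightarrow> ahom M N (\<lambda>x. madd N (a x) (mact N (-1) (b x)))"
  using ahom_plus ahom_neg by blast

lemma factor_inj: assumes X: "is_amod X" and Y: "is_amod Y" and i: "ahom X Y i" and inj: "inj_on i (mcar X)"
  and P: "is_amod P" and v: "ahom P Y v" and im: "\<forall>x\<in>mcar P. v x \<in> i ` mcar X"
  shows "ahom P X (\<lambda>x. inv_into (mcar X) i (v x)) \<and> (\<forall>x\<in>mcar P. i (inv_into (mcar X) i (v x)) = v x)"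
proof -
  define v' where "v' x = inv_into (mcar X) i (v x)" for x
  have vX: "x \<in> mcar P \<Longrightarrow> v' x \<in> mcar X" for x unfolding v'_def using im inv_into_into by metis
  have iv: "x \<in> mcar P \<Longrightarrow> i (v' x) = v x" for x unfolding v'_def using im f_inv_into_f by metis
  have "ahom P X v'" unfolding ahom_def
  proof (intro conjI ballI allI)
    fix x assume x: "x \<in> mcar P"
    show "v' x \<in> mcar X" using vX[OF x] .
    fix a
    have ax: "mact P a x \<in> mcar P" using am_act[OF P x] .
    have "i (v' (mact P a x)) = i (mact X a (v' x))"
      using iv[OF ax] iv[OF x] ahom_act[OF v x] ahom_act[OF i vX[OF x]] by simp
    thus "v' (mact P a x) = mact X a (v' x)"
      using inj vX[OF ax] am_act[OF X vX[OF x]] by (simp add: inj_on_eq_iff)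
  next
    fix x y assume x: "x \<in> mcar P" and y: "y \<in> mcar P"
    have xy: "madd P x y \<in> mcar P" using am_add[OF P x y] .
    have "i (v' (madd P x y)) = i (madd X (v' x) (v' y))"
      using iv[OF xy] iv[OF x] iv[OF y] ahom_add[OF v x y] ahom_add[OF i vX[OF x] vX[OF y]] by simp
    thus "v' (madd P x y) = madd X (v' x) (v' y)"
      using inj vX[OF xy] am_add[OF X vX[OF x] vX[OF y]] by (simp add: inj_on_eq_iff)
  qed
  thus ?thesis using iv unfolding v'_def by blast
qed

lemma ahom_ker_iff: "ahom P (ker_mod X Y g) v \<longleftrightarrow> ahom P X v \<and> (\<forall>x\<in>mcar P. g (v x) = mzero Y)"
  by (auto simp: ahom_def ker_mod_def)

theorem proposition3p7:
  fixes emb :: "'k::field \<Rightarrow> 'a::ring_1"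
    and P1 :: "('a, 'p1) amod" and P0 :: "('a, 'p0) amod" and f :: "'p1 \<Rightarrow> 'p0"
  assumes "alg_closed TYPE('k)"
    and "fd_algebra emb"
    and "in_projA P1" and "in_projA P0" and "ahom P1 P0 f"
  shows "(\<forall>(X::('a, 'x) amod) (Y::('a, 'y) amod) g.
            Wf emb P1 P0 f X \<and> Wf emb P1 P0 f Y \<and> ahom X Y g
            \<longrightarrow> Wf emb P1 P0 f (ker_mod X Y g))
       \<and> (\<forall>(X::('a, 'x) amod) (Y::('a, 'y) amod) (Z::('a, 'z) amod) g p.
            Wf emb P1 P0 f X \<and> Wf emb P1 P0 f Y \<and> ahom X Y g \<and>
            is_amod Z \<and> ahom Y Z p \<and> p ` mcar Y = mcar Z \<and>
            {y \<in> mcar Y. p y = mzero Z} = g ` mcar X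
            \<longrightarrow> Wf emb P1 P0 f Z)
       \<and> (\<forall>(X::('a, 'x) amod) (Y::('a, 'y) amod) (Z::('a, 'z) amod) i p.
            Wf emb P1 P0 f X \<and> Wf emb P1 P0 f Z \<and> in_modA Y \<and>
            ahom X Y i \<and> inj_on i (mcar X) \<and>
            ahom Y Z p \<and> p ` mcar Y = mcar Z \<and>
            {y \<in> mcar Y. p y = mzero Z} = i ` mcar X
            \<longrightarrow> Wf emb P1 P0 f Y)"
proof -
  have fd: "fd_algebra emb" and f: "ahom P1 P0 f" using assms by auto
  obtain n i0 r0 where pd1: "proj_data P1 n i0 r0" using projA_data[OF assms(3)] by blast
  obtain m i1 r1 where pd0: "proj_data P0 m i1 r1" using projA_data[OF assms(4)] by blast
  have P1: "is_amod P1" and P0: "is_amod P0" using pd1 pd0 by (auto simp: proj_data_def)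
  note WI = W_iff[OF pd1 pd0 f fd]
  show ?thesis
  proof (intro conjI allI impI)
    fix X :: "('a, 'x) amod" and Y :: "('a, 'y) amod" and g
    assume H: "Wf emb P1 P0 f X \<and> Wf emb P1 P0 f Y \<and> ahom X Y g"
    have XM: "in_modA X" and iX: "injP P1 P0 f X" and sX: "surjP P1 P0 f X"
      and YM: "in_modA Y" and iY: "injP P1 P0 f Y" and sY: "surjP P1 P0 f Y" and g: "ahom X Y g"
      using H WI by blast+
    have X: "is_amod X" and Y: "is_amod Y" using XM YM by (auto simp: in_modA_def)
    have "in_modA (ker_mod X Y g)" by (rule ker_fg[OF fd XM Y g])
    moreover have "injP P1 P0 f (ker_mod X Y g)" unfolding injP_def
    proof (intro allI impI)
      fix v assume "ahom P0 (ker_mod X Y g) v \<and> (\<forall>p\<in>mcar P1. v (f p) = mzero (ker_mod X Y g))"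
      hence "ahom P0 X v" "\<forall>p\<in>mcar P1. v (f p) = mzero X"
        by (simp_all only: ahom_ker_iff) (auto simp: ker_mod_def)
      hence "\<forall>x\<in>mcar P0. v x = mzero X" using iX by (simp add: injP_def)
      thus "\<forall>x\<in>mcar P0. v x = mzero (ker_mod X Y g)" by (simp add: ker_mod_def)
    qed
    moreover have "surjP P1 P0 f (ker_mod X Y g)" unfolding surjP_def
    proof (intro allI impI)
      fix u assume "ahom P1 (ker_mod X Y g) u"
      hence u: "ahom P1 X u" and gu: "\<forall>x\<in>mcar P1. g (u x) = mzero Y" by (auto simp: ahom_ker_iff)
      obtain v where v: "ahom P0 X v" and uv: "\<forall>p\<in>mcar P1. u p = v (f p)"
        using sX u by (auto simp: surjP_def)
      have "ahom P0 Y (\<lambda>x. g (v x))" by (rule ahom_comp[OF v g])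
      moreover have "\<forall>p\<in>mcar P1. g (v (f p)) = mzero Y" using uv gu by simp
      ultimately have "\<forall>x\<in>mcar P0. g (v x) = mzero Y"
        using iY[unfolded injP_def, rule_format, of "\<lambda>x. g (v x)"] by blast
      hence "ahom P0 (ker_mod X Y g) v" using v by (simp add: ahom_ker_iff)
      thus "\<exists>v. ahom P0 (ker_mod X Y g) v \<and> (\<forall>p\<in>mcar P1. u p = v (f p))" using uv by blast
    qed
    ultimately show "Wf emb P1 P0 f (ker_mod X Y g)" using WI by blast
  next
    fix X :: "('a, 'x) amod" and Y :: "('a, 'y) amod" and Z :: "('a, 'z) amod" and g p
    assume H: "Wf emb P1 P0 f X \<and> Wf emb P1 P0 f Y \<and> ahom X Y g \<and>
            is_amod Z \<and> ahom Y Z p \<and> p ` mcar Y = mcar Z \<and>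
            {y \<in> mcar Y. p y = mzero Z} = g ` mcar X"
    have XM: "in_modA X" and iX: "injP P1 P0 f X" and sX: "surjP P1 P0 f X"
      and YM: "in_modA Y" and iY: "injP P1 P0 f Y" and sY: "surjP P1 P0 f Y" and g: "ahom X Y g"
      and Z: "is_amod Z" and p: "ahom Y Z p" and sur: "p ` mcar Y = mcar Z"
      and ex: "{y \<in> mcar Y. p y = mzero Z} = g ` mcar X"
      using H WI by blast+
    have X: "is_amod X" and Y: "is_amod Y" using XM YM by (auto simp: in_modA_def)
    have "in_modA Z" by (rule quot_fg[OF YM Z p sur])
    moreover have "injP P1 P0 f Z" unfolding injP_def
    proof (intro allI impI)
      fix w assume "ahom P0 Z w \<and> (\<forall>p\<in>mcar P1. w (f p) = mzero Z)"
      hence w: "ahom P0 Z w" and wf: "\<forall>q\<in>mcar P1. w (f q) = mzero Z" by auto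
      obtain v where v: "ahom P0 Y v" and pv: "\<forall>x\<in>mcar P0. p (v x) = w x"
        using proj_lift[OF pd0 Y Z p w] ahom_car[OF w] sur by blast
      have vf: "ahom P1 Y (\<lambda>q. v (f q))" by (rule ahom_comp[OF f v])
      have "\<forall>q\<in>mcar P1. v (f q) \<in> g ` mcar X"
      proof
        fix q assume q: "q \<in> mcar P1"
        have "v (f q) \<in> {y \<in> mcar Y. p y = mzero Z}"
          using ahom_car[OF vf q] pv wf q ahom_car[OF f q] by simp
        thus "v (f q) \<in> g ` mcar X" using ex by simp
      qed
      then obtain u where u: "ahom P1 X u" and gu: "\<forall>q\<in>mcar P1. g (u q) = v (f q)"
        using proj_lift[OF pd1 X Y g vf] by blast
      obtain v' where v': "ahom P0 X v'" and uv': "\<forall>q\<in>mcar P1. u q = v' (f q)"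
        using sX u by (auto simp: surjP_def)
      have gv': "ahom P0 Y (\<lambda>x. g (v' x))" by (rule ahom_comp[OF v' g])
      have d: "ahom P0 Y (\<lambda>x. madd Y (v x) (mact Y (-1) (g (v' x))))" by (rule ahom_diff[OF Y v gv'])
      have "\<forall>q\<in>mcar P1. madd Y (v (f q)) (mact Y (-1) (g (v' (f q)))) = mzero Y"
        using uv' gu am_neg[OF Y] ahom_car[OF vf] by simp
      hence d0: "\<forall>x\<in>mcar P0. madd Y (v x) (mact Y (-1) (g (v' x))) = mzero Y"
        using iY d unfolding injP_def by blast
      show "\<forall>x\<in>mcar P0. w x = mzero Z"
      proof
        fix x assume x: "x \<in> mcar P0"
        have "v x = g (v' x)" using am_sub_eq[OF Y ahom_car[OF gv' x] ahom_car[OF v x]] d0 x by simp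
        moreover have "g (v' x) \<in> {y \<in> mcar Y. p y = mzero Z}" using ex ahom_car[OF v' x] by blast
        ultimately have "p (v x) = mzero Z" by simp
        thus "w x = mzero Z" using pv x by simp
      qed
    qed
    moreover have "surjP P1 P0 f Z" unfolding surjP_def
    proof (intro allI impI)
      fix u assume u: "ahom P1 Z u"
      obtain u' where u': "ahom P1 Y u'" and pu: "\<forall>q\<in>mcar P1. p (u' q) = u q"
        using proj_lift[OF pd1 Y Z p u] ahom_car[OF u] sur by blast
      obtain v where v: "ahom P0 Y v" and uv: "\<forall>q\<in>mcar P1. u' q = v (f q)"
        using sY u' by (auto simp: surjP_def)
      have "ahom P0 Z (\<lambda>x. p (v x))" by (rule ahom_comp[OF v p])
      moreover have "\<forall>q\<in>mcar P1. u q = p (v (f q))" using pu uv by simp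
      ultimately show "\<exists>v. ahom P0 Z v \<and> (\<forall>q\<in>mcar P1. u q = v (f q))" by blast
    qed
    ultimately show "Wf emb P1 P0 f Z" using WI by blast
  next
    fix X :: "('a, 'x) amod" and Y :: "('a, 'y) amod" and Z :: "('a, 'z) amod" and i p
    assume H: "Wf emb P1 P0 f X \<and> Wf emb P1 P0 f Z \<and> in_modA Y \<and>
            ahom X Y i \<and> inj_on i (mcar X) \<and>
            ahom Y Z p \<and> p ` mcar Y = mcar Z \<and>
            {y \<in> mcar Y. p y = mzero Z} = i ` mcar X"
    have XM: "in_modA X" and iX: "injP P1 P0 f X" and sX: "surjP P1 P0 f X"
      and ZM: "in_modA Z" and iZ: "injP P1 P0 f Z" and sZ: "surjP P1 P0 f Z"
      and YM: "in_modA Y" and i: "ahom X Y i" and inj: "inj_on i (mcar X)"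
      and p: "ahom Y Z p" and sur: "p ` mcar Y = mcar Z"
      and ex: "{y \<in> mcar Y. p y = mzero Z} = i ` mcar X"
      using H WI by blast+
    have X: "is_amod X" and Y: "is_amod Y" and Z: "is_amod Z" using XM YM ZM by (auto simp: in_modA_def)
    have "injP P1 P0 f Y" unfolding injP_def
    proof (intro allI impI)
      fix v assume "ahom P0 Y v \<and> (\<forall>p\<in>mcar P1. v (f p) = mzero Y)"
      hence v: "ahom P0 Y v" and vf: "\<forall>q\<in>mcar P1. v (f q) = mzero Y" by auto
      have pv: "ahom P0 Z (\<lambda>x. p (v x))" by (rule ahom_comp[OF v p])
      have "\<forall>q\<in>mcar P1. p (v (f q)) = mzero Z" using vf ahom_zero[OF Y Z p] by simp
      hence pv0: "\<forall>x\<in>mcar P0. p (v x) = mzero Z" using iZ pv unfolding injP_def by blast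
      have im: "\<forall>x\<in>mcar P0. v x \<in> i ` mcar X" using pv0 ex ahom_car[OF v] by blast
      obtain v' where v': "ahom P0 X v'" and iv': "\<forall>x\<in>mcar P0. i (v' x) = v x"
        using factor_inj[OF X Y i inj P0 v im] by blast
      have "\<forall>q\<in>mcar P1. v' (f q) = mzero X"
      proof
        fix q assume q: "q \<in> mcar P1"
        have "i (v' (f q)) = i (mzero X)" using iv' vf q ahom_car[OF f q] ahom_zero[OF X Y i] by simp
        thus "v' (f q) = mzero X" using inj ahom_car[OF v' ahom_car[OF f q]] am_zero[OF X]
          by (simp add: inj_on_eq_iff)
      qed
      hence "\<forall>x\<in>mcar P0. v' x = mzero X" using iX v' unfolding injP_def by blast
      thus "\<forall>x\<in>mcar P0. v x = mzero Y" using iv' ahom_zero[OF X Y i] by metis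
    qed
    moreover have "surjP P1 P0 f Y" unfolding surjP_def
    proof (intro allI impI)
      fix u assume u: "ahom P1 Y u"
      have pu: "ahom P1 Z (\<lambda>q. p (u q))" by (rule ahom_comp[OF u p])
      obtain w where w: "ahom P0 Z w" and pw: "\<forall>q\<in>mcar P1. p (u q) = w (f q)"
        using sZ pu unfolding surjP_def by blast
      obtain w' where w': "ahom P0 Y w'" and pw': "\<forall>x\<in>mcar P0. p (w' x) = w x"
        using proj_lift[OF pd0 Y Z p w] ahom_car[OF w] sur by blast
      have w'f: "ahom P1 Y (\<lambda>q. w' (f q))" by (rule ahom_comp[OF f w'])
      have d: "ahom P1 Y (\<lambda>q. madd Y (u q) (mact Y (-1) (w' (f q))))" by (rule ahom_diff[OF Y u w'f])
      have im: "\<forall>q\<in>mcar P1. madd Y (u q) (mact Y (-1) (w' (f q))) \<in> i ` mcar X"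
      proof
        fix q assume q: "q \<in> mcar P1"
        have "p (madd Y (u q) (mact Y (-1) (w' (f q)))) = madd Z (w (f q)) (mact Z (-1) (w (f q)))"
          using ahom_add[OF p ahom_car[OF u q] am_act[OF Y ahom_car[OF w'f q]]]
            ahom_act[OF p ahom_car[OF w'f q]] pw pw' q ahom_car[OF f q] by simp
        also have "\<dots> = mzero Z" using am_neg[OF Z ahom_car[OF w ahom_car[OF f q]]] .
        finally show "madd Y (u q) (mact Y (-1) (w' (f q))) \<in> i ` mcar X"
          using ex ahom_car[OF d q] by blast
      qed
      obtain d' where d': "ahom P1 X d'" and id': "\<forall>q\<in>mcar P1. i (d' q) = madd Y (u q) (mact Y (-1) (w' (f q)))"
        using factor_inj[OF X Y i inj P1 d im] by blast
      obtain v'' where v'': "ahom P0 X v''" and dv: "\<forall>q\<in>mcar P1. d' q = v'' (f q)"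
        using sX d' unfolding surjP_def by blast
      have V: "ahom P0 Y (\<lambda>x. madd Y (w' x) (i (v'' x)))"
        by (rule ahom_plus[OF Y w' ahom_comp[OF v'' i]])
      have "\<forall>q\<in>mcar P1. u q = madd Y (w' (f q)) (i (v'' (f q)))"
      proof
        fix q assume q: "q \<in> mcar P1"
        have a: "w' (f q) \<in> mcar Y" and b: "u q \<in> mcar Y" using ahom_car[OF w'f q] ahom_car[OF u q] by auto
        have "madd Y (w' (f q)) (i (v'' (f q))) = madd Y (w' (f q)) (madd Y (u q) (mact Y (-1) (w' (f q))))"
          using dv id' q by simp
        also have "\<dots> = madd Y (u q) (madd Y (w' (f q)) (mact Y (-1) (w' (f q))))"
          using am_lcomm[OF Y a b am_act[OF Y a]] .
        also have "\<dots> = u q" using am_neg[OF Y a] am_rzero[OF Y b] by simp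
        finally show "u q = madd Y (w' (f q)) (i (v'' (f q)))" by simp
      qed
      thus "\<exists>v. ahom P0 Y v \<and> (\<forall>q\<in>mcar P1. u q = v (f q))" using V by blast
    qed
    ultimately show "Wf emb P1 P0 f Y" using WI YM by blast
  qed
qed


end
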